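(* Let $T$ be a c.n.u. contraction on $H$ and suppose $t:=T|_{\mathbb{K}^\perp}\in\mathbb{B}(\mathbb{K}^\perp,\mathbb{K}_*^\perp)$ satisfies $\|t\|<1$. Define $\Gamma'_\pm$ on $A_T^{\perp_s}$ by $$\Gamma'_+=(I-t^*t)^{-1/2}\Gamma_+-t^*(I-tt^* )^{-1/2}\Gamma_-,\qquad \Gamma'_-=t(I-t^*t)^{-1/2}\Gamma_+-(I-tt^* )^{-1/2}\Gamma_-.$$ Then the contractive Weyl function with respect to $(\mathbb{K}^\perp,\mathbb{K}_*^\perp,\Gamma'_+,\Gamma'_-)$ is $B'(\lambda)=-\Theta_T(\lambda)$; that is, for every $\lambda\in\mathbb{D}$ and every $a\in N_\lambda=\{(x,\lambda x):x\in H\}\cap A_T^{\perp_s}$, $$\Gamma'_-a=\big(T-\lambda\mathfrak{D}_*(I-\lambda T^* )^{-1}\mathfrak{D}\big)\big|_{\mathbb{K}^\perp}\,\Gamma'_+a.$$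
   Context: $H$ is an infinite-dimensional separable complex Hilbert space; $T\in\mathbb{B}(H)$, $\|T\|\le1$, is completely non-unitary (no nonzero invariant subspace on which $T$ is unitary). $\mathbb{K}=\ker(I-T^*T)$, $\mathbb{K}_*=\ker(I-TT^* )$; $T$ maps $\mathbb{K}^\perp$ into $\mathbb{K}_*^\perp$. $\mathfrak{D}=(I-T^*T)^{1/2}$, $\mathfrak{D}_*=(I-TT^* )^{1/2}$, and the Sz.-Nagy–Foias characteristic function is $\Theta_T(\lambda)=(-T+\lambda\mathfrak{D}_*(I-\lambda T^* )^{-1}\mathfrak{D})|_{\mathbb{K}^\perp}$, $\lambda\in\mathbb{D}$ (open unit disc). $\mathbb{H}=H\oplus_\perp H$ with $[(x_1,x_2),(y_1,y_2)]=i(x_1,y_1)_H-i(x_2,y_2)_H$; $S^{\perp_s}=\{a:[a,b]=0\ \forall b\in S\}$; $A_T=\{(x,Tx):x\in\mathbb{K}\}$. Every $a\in A_T^{\perp_s}$ decomposes uniquely as $a=(x_0,Tx_0)+(a_+,0)+(0,a_-)$ with $x_0\in\mathbb{K}$, $a_+\in\mathbb{K}^\perp$, $a_-\in\mathbb{K}_*^\perp$; the canonical boundary maps are $\Gamma_+a=a_+$, $\Gamma_-a=a_-$. *)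

theory Defs
  imports Complex_Main "HOL-Library.Function_Algebras"
begin

text \<open>The separable infinite-dimensional complex Hilbert space H is realised
  concretely as ell^2(nat): square-summable complex sequences.\<close>

type_synonym vec = "nat \<Rightarrow> complex"

definition l2 :: "vec set" where
  "l2 = {x. summable (\<lambda>n. (cmod (x n))^2)}"

definition cinner :: "vec \<Rightarrow> vec \<Rightarrow> complex" where
  "cinner x y = (\<Sum>n. x n * cnj (y n))"

definition l2norm :: "vec \<Rightarrow> real" where
  "l2norm x = sqrt (\<Sum>n. (cmod (x n))^2)"

definition smul :: "complex \<Rightarrow> vec \<Rightarrow> vec" where
  "smul c x = (\<lambda>n. c * x n)"

definition closed_subspace :: "vec set \<Rightarrow> bool" where
  "closed_subspace M \<longleftrightarrow> M \<subseteq> l2 \<and> 0 \<in> M \<and> (\<forall>x\<in>M. \<forall>y\<in>M. x + y \<in> M)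
     \<and> (\<forall>c. \<forall>x\<in>M. smul c x \<in> M)
     \<and> (\<forall>X x. (\<forall>k. X k \<in> M) \<and> x \<in> l2 \<and> (\<lambda>k. l2norm (X k - x)) \<longlonglongrightarrow> 0 \<longrightarrow> x \<in> M)"

definition orth :: "vec set \<Rightarrow> vec set" where
  "orth S = {y \<in> l2. \<forall>x\<in>S. cinner x y = 0}"

definition bounded_op :: "vec set \<Rightarrow> vec set \<Rightarrow> (vec \<Rightarrow> vec) \<Rightarrow> bool" where
  "bounded_op M N T \<longleftrightarrow> (\<forall>x\<in>M. T x \<in> N)
     \<and> (\<forall>x\<in>M. \<forall>y\<in>M. T (x + y) = T x + T y)
     \<and> (\<forall>c. \<forall>x\<in>M. T (smul c x) = smul c (T x))
     \<and> (\<exists>C. \<forall>x\<in>M. l2norm (T x) \<le> C * l2norm x)"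

definition op_norm_on :: "vec set \<Rightarrow> (vec \<Rightarrow> vec) \<Rightarrow> real" where
  "op_norm_on M T = Sup {l2norm (T x) | x. x \<in> M \<and> l2norm x \<le> 1}"

definition adj_on :: "vec set \<Rightarrow> vec set \<Rightarrow> (vec \<Rightarrow> vec) \<Rightarrow> (vec \<Rightarrow> vec)" where
  "adj_on M N T = (\<lambda>y. if y \<in> N then (THE z. z \<in> M \<and> (\<forall>x\<in>M. cinner (T x) y = cinner x z)) else 0)"

abbreviation adj :: "(vec \<Rightarrow> vec) \<Rightarrow> (vec \<Rightarrow> vec)" where
  "adj T \<equiv> adj_on l2 l2 T"

definition op_sqrt_on :: "vec set \<Rightarrow> (vec \<Rightarrow> vec) \<Rightarrow> (vec \<Rightarrow> vec)" where
  "op_sqrt_on M A = (THE S. bounded_op M M S \<and> (\<forall>x. x \<notin> M \<longrightarrow> S x = 0)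
     \<and> (\<forall>x\<in>M. \<forall>y\<in>M. cinner (S x) y = cinner x (S y))
     \<and> (\<forall>x\<in>M. Im (cinner (S x) x) = 0 \<and> 0 \<le> Re (cinner (S x) x))
     \<and> (\<forall>x\<in>M. S (S x) = A x))"

definition op_inv_on :: "vec set \<Rightarrow> (vec \<Rightarrow> vec) \<Rightarrow> (vec \<Rightarrow> vec)" where
  "op_inv_on M A = (\<lambda>y. if y \<in> M then (THE x. x \<in> M \<and> A x = y) else 0)"

definition defect :: "(vec \<Rightarrow> vec) \<Rightarrow> (vec \<Rightarrow> vec)" where
  "defect T = op_sqrt_on l2 (\<lambda>x. x - adj T (T x))"

definition defect_star :: "(vec \<Rightarrow> vec) \<Rightarrow> (vec \<Rightarrow> vec)" where
  "defect_star T = op_sqrt_on l2 (\<lambda>x. x - T (adj T x))"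

definition Kset :: "(vec \<Rightarrow> vec) \<Rightarrow> vec set" where
  "Kset T = {x \<in> l2. x - adj T (T x) = 0}"

definition Kstar :: "(vec \<Rightarrow> vec) \<Rightarrow> vec set" where
  "Kstar T = {x \<in> l2. x - T (adj T x) = 0}"

definition char_fun :: "(vec \<Rightarrow> vec) \<Rightarrow> complex \<Rightarrow> (vec \<Rightarrow> vec)" where
  "char_fun T l = (\<lambda>x. if x \<in> orth (Kset T) then
      - T x + smul l (defect_star T (op_inv_on l2 (\<lambda>y. y - smul l (adj T y)) (defect T x)))
    else 0)"

definition cnu :: "(vec \<Rightarrow> vec) \<Rightarrow> bool" where
  "cnu T \<longleftrightarrow> \<not> (\<exists>M. closed_subspace M \<and> M \<noteq> {0} \<and> T ` M = M
                  \<and> (\<forall>x\<in>M. l2norm (T x) = l2norm x))"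

definition krein_form :: "vec \<times> vec \<Rightarrow> vec \<times> vec \<Rightarrow> complex" where
  "krein_form a b = \<i> * cinner (fst a) (fst b) - \<i> * cinner (snd a) (snd b)"

definition s_orth :: "(vec \<times> vec) set \<Rightarrow> (vec \<times> vec) set" where
  "s_orth S = {a. fst a \<in> l2 \<and> snd a \<in> l2 \<and> (\<forall>b\<in>S. krein_form a b = 0)}"

definition A_T :: "(vec \<Rightarrow> vec) \<Rightarrow> (vec \<times> vec) set" where
  "A_T T = {(x, T x) | x. x \<in> Kset T}"

definition Gamma_plus :: "(vec \<Rightarrow> vec) \<Rightarrow> vec \<times> vec \<Rightarrow> vec" where
  "Gamma_plus T a = (THE p. p \<in> orth (Kset T) \<and>
      (\<exists>x0\<in>Kset T. \<exists>m\<in>orth (Kstar T). a = (x0 + p, T x0 + m)))"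

definition Gamma_minus :: "(vec \<Rightarrow> vec) \<Rightarrow> vec \<times> vec \<Rightarrow> vec" where
  "Gamma_minus T a = (THE m. m \<in> orth (Kstar T) \<and>
      (\<exists>x0\<in>Kset T. \<exists>p\<in>orth (Kset T). a = (x0 + p, T x0 + m)))"

definition N_lambda :: "(vec \<Rightarrow> vec) \<Rightarrow> complex \<Rightarrow> (vec \<times> vec) set" where
  "N_lambda T l = {(x, smul l x) | x. x \<in> l2} \<inter> s_orth (A_T T)"

text \<open>t = T restricted to K-perp, t* its adjoint K*-perp \<rightarrow> K-perp.\<close>
definition t_star :: "(vec \<Rightarrow> vec) \<Rightarrow> (vec \<Rightarrow> vec)" where
  "t_star T = adj_on (orth (Kset T)) (orth (Kstar T)) T"

definition R1 :: "(vec \<Rightarrow> vec) \<Rightarrow> (vec \<Rightarrow> vec)" where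
  "R1 T = op_inv_on (orth (Kset T)) (op_sqrt_on (orth (Kset T)) (\<lambda>x. x - t_star T (T x)))"

definition R2 :: "(vec \<Rightarrow> vec) \<Rightarrow> (vec \<Rightarrow> vec)" where
  "R2 T = op_inv_on (orth (Kstar T)) (op_sqrt_on (orth (Kstar T)) (\<lambda>y. y - T (t_star T y)))"

definition Gamma'_plus :: "(vec \<Rightarrow> vec) \<Rightarrow> vec \<times> vec \<Rightarrow> vec" where
  "Gamma'_plus T a = R1 T (Gamma_plus T a) - t_star T (R2 T (Gamma_minus T a))"

definition Gamma'_minus :: "(vec \<Rightarrow> vec) \<Rightarrow> vec \<times> vec \<Rightarrow> vec" where
  "Gamma'_minus T a = T (R1 T (Gamma_plus T a)) - R2 T (Gamma_minus T a)"

end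

theory Submission
  imports Defs "HOL-Analysis.Infinite_Sum" "HOL-Analysis.L2_Norm" "HOL-Computational_Algebra.Formal_Power_Series"
begin


section \<open>l2 basics\<close>

lemma l2_iff: "x \<in> l2 \<longleftrightarrow> summable (\<lambda>n. (cmod (x n))^2)"
  by (simp add: l2_def)

lemma l2_zero[simp]: "(0::vec) \<in> l2"
  by (simp add: l2_def)

lemma cmod_add_sq: "(cmod (a + b))^2 \<le> 2 * (cmod a)^2 + 2 * (cmod b)^2"
proof -
  have "cmod (a + b) \<le> cmod a + cmod b" by (rule norm_triangle_ineq)
  hence "(cmod (a + b))^2 \<le> (cmod a + cmod b)^2"
    by (simp add: power_mono)
  also have "\<dots> \<le> 2 * (cmod a)^2 + 2 * (cmod b)^2"
    using zero_le_power2[of "cmod a - cmod b"] unfolding power2_sum power2_diff by linarith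
  finally show ?thesis .
qed

lemma l2_add[simp]: "x \<in> l2 \<Longrightarrow> y \<in> l2 \<Longrightarrow> x + y \<in> l2"
  unfolding l2_def
proof clarsimp
  assume a: "summable (\<lambda>n. (cmod (x n))\<^sup>2)" "summable (\<lambda>n. (cmod (y n))\<^sup>2)"
  show "summable (\<lambda>n. (cmod (x n + y n))\<^sup>2)"
    by (rule summable_comparison_test'[where g="\<lambda>n. 2 * (cmod (x n))^2 + 2 * (cmod (y n))^2"])
       (use a cmod_add_sq in \<open>auto intro: summable_add summable_mult\<close>)
qed

lemma l2_smul[simp]: "x \<in> l2 \<Longrightarrow> smul c x \<in> l2"
  unfolding l2_def smul_def by (simp add: norm_mult power_mult_distrib summable_mult)

lemma smul_minus1: "smul (-1) x = - x"
  by (auto simp: smul_def)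

lemma l2_uminus[simp]: "x \<in> l2 \<Longrightarrow> - x \<in> l2"
  unfolding l2_def by simp

lemma l2_diff[simp]: "x \<in> l2 \<Longrightarrow> y \<in> l2 \<Longrightarrow> x - y \<in> l2"
  using l2_add[of x "-y"] by simp

lemma l2_sum[simp]: "(\<And>i. i \<in> A \<Longrightarrow> f i \<in> l2) \<Longrightarrow> (\<lambda>k. \<Sum>i\<in>A. f i k) \<in> l2"
proof (induction A rule: infinite_finite_induct)
  case (infinite A) then show ?case by (simp add: zero_fun_def[symmetric])
next
  case empty then show ?case by (simp add: zero_fun_def[symmetric])
next
  case (insert a A)
  have "(\<lambda>k. \<Sum>i\<in>insert a A. f i k) = f a + (\<lambda>k. \<Sum>i\<in>A. f i k)"
    using insert by auto
  then show ?case using insert by simp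
qed

lemma cmod_mult_cnj_le: "cmod (a * cnj b) \<le> ((cmod a)^2 + (cmod b)^2) / 2"
proof -
  have "cmod (a * cnj b) = cmod a * cmod b" by (simp add: norm_mult)
  also have "\<dots> \<le> ((cmod a)^2 + (cmod b)^2) / 2"
    using sum_squares_bound[of "cmod a" "cmod b"] by (simp add: power2_eq_square)
  finally show ?thesis .
qed

lemma cinner_norm_summable:
  assumes "x \<in> l2" "y \<in> l2" shows "summable (\<lambda>n. cmod (x n * cnj (y n)))"
  by (rule summable_comparison_test'[where g="\<lambda>n. ((cmod (x n))^2 + (cmod (y n))^2) / 2"])
     (use assms cmod_mult_cnj_le in \<open>auto simp: l2_def intro: summable_add summable_divide\<close>)

lemma cinner_summable:
  assumes "x \<in> l2" "y \<in> l2" shows "summable (\<lambda>n. x n * cnj (y n))"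
  by (rule summable_norm_cancel[OF cinner_norm_summable[OF assms]])

lemma cinner_sums: "x \<in> l2 \<Longrightarrow> y \<in> l2 \<Longrightarrow> (\<lambda>n. x n * cnj (y n)) sums cinner x y"
  unfolding cinner_def by (rule summable_sums[OF cinner_summable])

lemma cinner_add_left: "x \<in> l2 \<Longrightarrow> y \<in> l2 \<Longrightarrow> z \<in> l2 \<Longrightarrow> cinner (x + y) z = cinner x z + cinner y z"
  unfolding cinner_def
  by (simp add: distrib_right suminf_add[OF cinner_summable cinner_summable])

lemma cinner_smul_left: "x \<in> l2 \<Longrightarrow> y \<in> l2 \<Longrightarrow> cinner (smul c x) y = c * cinner x y"
  unfolding cinner_def smul_def
  by (simp add: mult.assoc suminf_mult[OF cinner_summable])

lemma cinner_cnj: "x \<in> l2 \<Longrightarrow> y \<in> l2 \<Longrightarrow> cinner y x = cnj (cinner x y)"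
proof -
  assume a: "x \<in> l2" "y \<in> l2"
  have "(\<lambda>n. cnj (x n * cnj (y n))) sums cnj (cinner x y)"
    using cinner_sums[OF a] by (simp only: sums_cnj)
  hence "(\<lambda>n. y n * cnj (x n)) sums cnj (cinner x y)" by (simp add: mult.commute)
  thus ?thesis using sums_unique2[OF cinner_sums[OF a(2,1)]] by simp
qed

lemma cinner_add_right: "x \<in> l2 \<Longrightarrow> y \<in> l2 \<Longrightarrow> z \<in> l2 \<Longrightarrow> cinner z (x + y) = cinner z x + cinner z y"
  by (simp add: cinner_cnj[of _ z] cinner_add_left)

lemma cinner_smul_right: "x \<in> l2 \<Longrightarrow> y \<in> l2 \<Longrightarrow> cinner y (smul c x) = cnj c * cinner y x"
  by (simp add: cinner_cnj[of _ y] cinner_smul_left)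

lemma cinner_minus_left: "x \<in> l2 \<Longrightarrow> y \<in> l2 \<Longrightarrow> cinner (- x) y = - cinner x y"
  using cinner_smul_left[of x y "-1"] by (simp add: smul_minus1)

lemma cinner_minus_right: "x \<in> l2 \<Longrightarrow> y \<in> l2 \<Longrightarrow> cinner y (- x) = - cinner y x"
  using cinner_smul_right[of x y "-1"] by (simp add: smul_minus1)

lemma cinner_diff_left: "x \<in> l2 \<Longrightarrow> y \<in> l2 \<Longrightarrow> z \<in> l2 \<Longrightarrow> cinner (x - y) z = cinner x z - cinner y z"
  using cinner_add_left[of x "-y" z] by (simp add: cinner_minus_left)

lemma cinner_diff_right: "x \<in> l2 \<Longrightarrow> y \<in> l2 \<Longrightarrow> z \<in> l2 \<Longrightarrow> cinner z (x - y) = cinner z x - cinner z y"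
  using cinner_add_right[of x "-y" z] by (simp add: cinner_minus_right)

lemma cinner_zero_left[simp]: "cinner 0 y = 0"
  by (simp add: cinner_def)

lemma cinner_zero_right[simp]: "cinner y 0 = 0"
  by (simp add: cinner_def)

lemma l2norm_sq: "x \<in> l2 \<Longrightarrow> (l2norm x)^2 = (\<Sum>n. (cmod (x n))^2)"
proof -
  assume "x \<in> l2"
  hence "0 \<le> (\<Sum>n. (cmod (x n))^2)" by (intro suminf_nonneg) (auto simp: l2_def)
  thus ?thesis unfolding l2norm_def by simp
qed

lemma l2norm_nonneg[simp]: "x \<in> l2 \<Longrightarrow> 0 \<le> l2norm x"
  using l2norm_sq[of x] by (metis l2norm_def real_sqrt_ge_zero suminf_nonneg zero_le_power2 l2_iff)

lemma cinner_self: "x \<in> l2 \<Longrightarrow> cinner x x = complex_of_real ((l2norm x)^2)"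
proof -
  assume a: "x \<in> l2"
  have "(\<lambda>n. x n * cnj (x n)) = (\<lambda>n. complex_of_real ((cmod (x n))^2))"
    by (simp add: complex_mult_cnj cmod_def)
  hence "cinner x x = (\<Sum>n. complex_of_real ((cmod (x n))^2))" by (simp add: cinner_def)
  also have "\<dots> = complex_of_real (\<Sum>n. (cmod (x n))^2)"
    using a by (simp add: l2_def suminf_of_real)
  finally show ?thesis using l2norm_sq[OF a] by simp
qed

lemma l2norm_zero_iff: "x \<in> l2 \<Longrightarrow> l2norm x = 0 \<longleftrightarrow> x = 0"
proof -
  assume a: "x \<in> l2"
  have "l2norm x = 0 \<longleftrightarrow> (\<Sum>n. (cmod (x n))^2) = 0"
    using l2norm_sq[OF a] by (metis l2norm_def real_sqrt_zero zero_power2 power_zero_numeral)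
  also have "\<dots> \<longleftrightarrow> (\<forall>n. (cmod (x n))^2 = 0)"
    using a by (intro suminf_eq_zero_iff) (auto simp: l2_def)
  also have "\<dots> \<longleftrightarrow> x = 0" by (auto simp: fun_eq_iff)
  finally show ?thesis .
qed

lemma l2norm_zero[simp]: "l2norm 0 = 0"
  by (simp add: l2norm_def)

lemma coord_le_l2norm: "x \<in> l2 \<Longrightarrow> cmod (x k) \<le> l2norm x"
proof -
  assume a: "x \<in> l2"
  have "(cmod (x k))^2 \<le> (\<Sum>n. (cmod (x n))^2)"
    using sum_le_suminf[of "\<lambda>n. (cmod (x n))^2" "{k}"] a by (auto simp: l2_def)
  thus ?thesis unfolding l2norm_def by (simp add: real_le_rsqrt)
qed

lemma cinner_le_sum: "x \<in> l2 \<Longrightarrow> y \<in> l2 \<Longrightarrow> cmod (cinner x y) \<le> (\<Sum>n. cmod (x n) * cmod (y n))"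
  unfolding cinner_def
  using summable_norm[OF cinner_norm_summable] by (simp add: norm_mult)

lemma sum_prod_le_l2:
  assumes "x \<in> l2" "y \<in> l2"
  shows "(\<Sum>n. cmod (x n) * cmod (y n)) \<le> l2norm x * l2norm y"
proof (rule suminf_le_const)
  show "summable (\<lambda>n. cmod (x n) * cmod (y n))"
    using cinner_norm_summable[OF assms] by (simp add: norm_mult)
  fix N
  have "(\<Sum>n<N. cmod (x n) * cmod (y n)) = (\<Sum>n<N. \<bar>cmod (x n)\<bar> * \<bar>cmod (y n)\<bar>)" by simp
  also have "\<dots> \<le> L2_set (\<lambda>n. cmod (x n)) {..<N} * L2_set (\<lambda>n. cmod (y n)) {..<N}"
    by (rule L2_set_mult_ineq)
  also have "\<dots> \<le> l2norm x * l2norm y"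
  proof (rule mult_mono)
    show "L2_set (\<lambda>n. cmod (x n)) {..<N} \<le> l2norm x"
      unfolding L2_set_def l2norm_def
      using sum_le_suminf[of "\<lambda>n. (cmod (x n))^2" "{..<N}"] assms by (auto simp: l2_def)
    show "L2_set (\<lambda>n. cmod (y n)) {..<N} \<le> l2norm y"
      unfolding L2_set_def l2norm_def
      using sum_le_suminf[of "\<lambda>n. (cmod (y n))^2" "{..<N}"] assms by (auto simp: l2_def)
  qed (use assms in auto)
  finally show "(\<Sum>n<N. cmod (x n) * cmod (y n)) \<le> l2norm x * l2norm y" .
qed

lemma cauchy_schwarz: "x \<in> l2 \<Longrightarrow> y \<in> l2 \<Longrightarrow> cmod (cinner x y) \<le> l2norm x * l2norm y"
  using cinner_le_sum sum_prod_le_l2 order_trans by blast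

lemma l2norm_sq_cinner: "x \<in> l2 \<Longrightarrow> (l2norm x)^2 = Re (cinner x x)"
  by (simp add: cinner_self)

lemma l2norm_triangle: "x \<in> l2 \<Longrightarrow> y \<in> l2 \<Longrightarrow> l2norm (x + y) \<le> l2norm x + l2norm y"
proof -
  assume a: "x \<in> l2" "y \<in> l2"
  have "(l2norm (x + y))^2 = Re (cinner x x) + Re (cinner x y) + Re (cinner y x) + Re (cinner y y)"
    using a by (simp add: l2norm_sq_cinner cinner_add_left cinner_add_right)
  also have "\<dots> \<le> (l2norm x)^2 + 2 * (l2norm x * l2norm y) + (l2norm y)^2"
  proof -
    have "Re (cinner x y) \<le> l2norm x * l2norm y"
      using cauchy_schwarz[OF a] complex_Re_le_cmod order_trans by blast
    moreover have "Re (cinner y x) \<le> l2norm x * l2norm y"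
      using cauchy_schwarz[OF a(2,1)] complex_Re_le_cmod order_trans by (metis mult.commute)
    ultimately show ?thesis using a by (simp add: l2norm_sq_cinner)
  qed
  also have "\<dots> = (l2norm x + l2norm y)^2" by (simp add: power2_eq_square algebra_simps)
  finally show ?thesis
    by (rule power2_le_imp_le) (use a in simp)
qed

lemma l2norm_smul: "x \<in> l2 \<Longrightarrow> l2norm (smul c x) = cmod c * l2norm x"
proof -
  assume a: "x \<in> l2"
  have "(\<Sum>n. (cmod (c * x n))^2) = (cmod c)^2 * (\<Sum>n. (cmod (x n))^2)"
    using a by (simp add: norm_mult power_mult_distrib suminf_mult l2_def)
  thus ?thesis unfolding l2norm_def smul_def by (simp add: real_sqrt_mult)
qed

lemma l2norm_uminus: "l2norm (- x) = l2norm x"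
  by (simp add: l2norm_def)

lemma l2norm_minus_commute: "l2norm (x - y) = l2norm (y - x)"
  by (metis l2norm_uminus minus_diff_eq)

lemma l2norm_diff_triangle: "x \<in> l2 \<Longrightarrow> y \<in> l2 \<Longrightarrow> z \<in> l2 \<Longrightarrow> l2norm (x - z) \<le> l2norm (x - y) + l2norm (y - z)"
  using l2norm_triangle[of "x - y" "y - z"] by simp

lemma cinner_eq_zero_all: "x \<in> l2 \<Longrightarrow> cinner x x = 0 \<Longrightarrow> x = 0"
  by (metis cinner_self l2norm_zero_iff of_real_eq_0_iff zero_eq_power2)



definition psum :: "(nat \<Rightarrow> nat \<Rightarrow> complex) \<Rightarrow> nat \<Rightarrow> nat \<Rightarrow> complex" where
  "psum v N = (\<lambda>k. \<Sum>n<N. v n k)"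

definition ssum :: "(nat \<Rightarrow> nat \<Rightarrow> complex) \<Rightarrow> nat \<Rightarrow> complex" where
  "ssum v = (\<lambda>k. \<Sum>n. v n k)"

lemma psum_l2: "(\<And>n. v n \<in> l2) \<Longrightarrow> psum v N \<in> l2"
  unfolding psum_def by (rule l2_sum) auto

lemma psum_Suc: "psum v (Suc N) = psum v N + v N"
  by (auto simp: psum_def)

lemma psum_0[simp]: "psum v 0 = 0"
  by (auto simp: psum_def)

lemma coord_summable:
  assumes "\<And>n. v n \<in> l2" "summable (\<lambda>n. l2norm (v n))"
  shows "summable (\<lambda>n. norm (v n k))"
  by (rule summable_comparison_test'[OF assms(2)]) (use assms coord_le_l2norm in auto)

lemma L2_psum_le: fixes v :: "nat \<Rightarrow> nat \<Rightarrow> complex" and M :: nat shows "L2_set (\<lambda>k. cmod (\<Sum>n<M. v n k)) A \<le> (\<Sum>n<M. L2_set (\<lambda>k. cmod (v n k)) A)"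
proof (induction M)
  case 0 then show ?case by (simp add: L2_set_def)
next
  case (Suc M)
  have "L2_set (\<lambda>k. cmod (\<Sum>n<Suc M. v n k)) A \<le> L2_set (\<lambda>k. cmod (\<Sum>n<M. v n k) + cmod (v M k)) A"
    by (rule L2_set_mono) (auto intro: norm_triangle_ineq)
  also have "\<dots> \<le> L2_set (\<lambda>k. cmod (\<Sum>n<M. v n k)) A + L2_set (\<lambda>k. cmod (v M k)) A"
    by (rule L2_set_triangle_ineq)
  also have "\<dots> \<le> (\<Sum>n<Suc M. L2_set (\<lambda>k. cmod (v n k)) A)"
    using Suc by simp
  finally show ?case .
qed

lemma L2_set_le_l2norm: "x \<in> l2 \<Longrightarrow> L2_set (\<lambda>k. cmod (x k)) {..<K} \<le> l2norm x"
  unfolding L2_set_def l2norm_def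
  using sum_le_suminf[of "\<lambda>n. (cmod (x n))^2" "{..<K}"] by (auto simp: l2_def)

lemma series_bound:
  assumes v: "\<And>n. v n \<in> l2" and s: "summable (\<lambda>n. l2norm (v n))"
  shows "ssum v \<in> l2" "l2norm (ssum v) \<le> (\<Sum>n. l2norm (v n))"
proof -
  define B where "B = (\<Sum>n. l2norm (v n))"
  have B0: "0 \<le> B" unfolding B_def using v s by (auto intro: suminf_nonneg)
  have cs: "\<And>k. summable (\<lambda>n. v n k)"
    by (rule summable_norm_cancel[OF coord_summable[OF v s]])
  have L2K: "L2_set (\<lambda>k. cmod (ssum v k)) {..<K} \<le> B" for K
  proof -
    have lim: "(\<lambda>M. L2_set (\<lambda>k. cmod (\<Sum>n<M. v n k)) {..<K}) \<longlonglongrightarrow> L2_set (\<lambda>k. cmod (ssum v k)) {..<K}"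
      unfolding L2_set_def ssum_def
      by (intro tendsto_intros summable_LIMSEQ cs)
    have "L2_set (\<lambda>k. cmod (\<Sum>n<M. v n k)) {..<K} \<le> B" for M
    proof -
      have "L2_set (\<lambda>k. cmod (\<Sum>n<M. v n k)) {..<K} \<le> (\<Sum>n<M. L2_set (\<lambda>k. cmod (v n k)) {..<K})"
        by (rule L2_psum_le)
      also have "\<dots> \<le> (\<Sum>n<M. l2norm (v n))"
        by (intro sum_mono L2_set_le_l2norm v)
      also have "\<dots> \<le> B" unfolding B_def using v s by (intro sum_le_suminf) auto
      finally show ?thesis .
    qed
    thus ?thesis by (intro LIMSEQ_le_const2[OF lim]) auto
  qed
  have sq: "(\<Sum>k<K. (cmod (ssum v k))^2) \<le> B^2" for K
  proof -
    have "sqrt (\<Sum>k<K. (cmod (ssum v k))^2) \<le> B" using L2K[of K] by (simp add: L2_set_def)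
    moreover have "0 \<le> (\<Sum>k<K. (cmod (ssum v k))^2)" by (rule sum_nonneg) simp
    ultimately show ?thesis using power_mono[of "sqrt (\<Sum>k<K. (cmod (ssum v k))^2)" B 2] by simp
  qed
  have summ: "summable (\<lambda>k. (cmod (ssum v k))^2)"
    by (rule summableI_nonneg_bounded[where x="B^2"]) (use sq in auto)
  thus "ssum v \<in> l2" by (simp add: l2_def)
  have "(\<Sum>k. (cmod (ssum v k))^2) \<le> B^2"
    by (rule suminf_le_const[OF summ sq])
  hence "l2norm (ssum v) \<le> sqrt (B^2)" unfolding l2norm_def by (rule real_sqrt_le_mono)
  hence "l2norm (ssum v) \<le> B" using B0 by simp
  thus "l2norm (ssum v) \<le> (\<Sum>n. l2norm (v n))" unfolding B_def .
qed

lemma ssum_minus_psum: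
  assumes v: "\<And>n. v n \<in> l2" and s: "summable (\<lambda>n. l2norm (v n))"
  shows "ssum v - psum v N = ssum (\<lambda>n. v (n + N))"
proof -
  have cs: "\<And>k. summable (\<lambda>n. v n k)"
    by (rule summable_norm_cancel[OF coord_summable[OF v s]])
  show ?thesis
  proof (rule ext)
    fix k
    have "(\<Sum>n. v n k) = (\<Sum>n. v (n + N) k) + (\<Sum>i<N. v i k)"
      by (rule suminf_split_initial_segment[OF cs])
    thus "(ssum v - psum v N) k = ssum (\<lambda>n. v (n + N)) k" by (simp add: ssum_def psum_def)
  qed
qed

lemma series_conv:
  assumes v: "\<And>n. v n \<in> l2" and s: "summable (\<lambda>n. l2norm (v n))"
  shows "(\<lambda>N. l2norm (ssum v - psum v N)) \<longlonglongrightarrow> 0"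
proof (rule tendsto_sandwich[where f="\<lambda>_. 0" and h="\<lambda>N. (\<Sum>n. l2norm (v (n + N)))"])
  have sN: "summable (\<lambda>n. l2norm (v (n + N)))" for N
    using s summable_iff_shift[where f="\<lambda>m. l2norm (v m)" and k=N] by simp
  show "\<forall>\<^sub>F N in sequentially. 0 \<le> l2norm (ssum v - psum v N)"
    by (rule always_eventually) (use v s series_bound(1)[OF v s] psum_l2[OF v] in auto)
  show "\<forall>\<^sub>F N in sequentially. l2norm (ssum v - psum v N) \<le> (\<Sum>n. l2norm (v (n + N)))"
    unfolding ssum_minus_psum[OF v s] by (rule always_eventually, intro allI series_bound(2)) (use v sN in auto)
  show "(\<lambda>_. 0) \<longlonglongrightarrow> (0::real)" by simp
  have "(\<lambda>N. (\<Sum>n. l2norm (v n)) - (\<Sum>n<N. l2norm (v n))) \<longlonglongrightarrow> (\<Sum>n. l2norm (v n)) - (\<Sum>n. l2norm (v n))"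
    by (intro tendsto_intros summable_LIMSEQ s)
  moreover have "(\<Sum>n. l2norm (v (n + N))) = (\<Sum>n. l2norm (v n)) - (\<Sum>n<N. l2norm (v n))" for N
    using suminf_split_initial_segment[OF s, of N] by simp
  ultimately show "(\<lambda>N. \<Sum>n. l2norm (v (n + N))) \<longlonglongrightarrow> 0" by simp
qed

lemma conv_coord:
  assumes "\<And>N. X N \<in> l2" "x \<in> l2" "(\<lambda>N. l2norm (X N - x)) \<longlonglongrightarrow> 0"
  shows "(\<lambda>N. X N k) \<longlonglongrightarrow> x k"
proof -
  have "(\<lambda>N. X N k - x k) \<longlonglongrightarrow> 0"
  proof (rule tendsto_norm_zero_cancel, rule tendsto_sandwich[OF _ _ tendsto_const assms(3)])
    show "\<forall>\<^sub>F n in sequentially. 0 \<le> norm (X n k - x k)" by simp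
    show "\<forall>\<^sub>F n in sequentially. norm (X n k - x k) \<le> l2norm (X n - x)"
      using coord_le_l2norm[of "X _ - x" k] assms by auto
  qed
  thus ?thesis using tendsto_add[OF _ tendsto_const[of "x k"]] by fastforce
qed

section \<open>Subspaces\<close>

definition subsp :: "vec set \<Rightarrow> bool" where
  "subsp M \<longleftrightarrow> M \<subseteq> l2 \<and> 0 \<in> M \<and> (\<forall>x\<in>M. \<forall>y\<in>M. x + y \<in> M) \<and> (\<forall>c. \<forall>x\<in>M. smul c x \<in> M)"

definition sclosed :: "vec set \<Rightarrow> bool" where
  "sclosed M \<longleftrightarrow> (\<forall>v. (\<forall>n. v n \<in> M) \<and> summable (\<lambda>n. l2norm (v n)) \<longrightarrow> ssum v \<in> M)"

lemma subsp_l2: "subsp M \<Longrightarrow> x \<in> M \<Longrightarrow> x \<in> l2"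
  unfolding subsp_def by blast

lemma subsp_zero: "subsp M \<Longrightarrow> 0 \<in> M"
  unfolding subsp_def by blast

lemma subsp_add: "subsp M \<Longrightarrow> x \<in> M \<Longrightarrow> y \<in> M \<Longrightarrow> x + y \<in> M"
  unfolding subsp_def by blast

lemma subsp_smul: "subsp M \<Longrightarrow> x \<in> M \<Longrightarrow> smul c x \<in> M"
  unfolding subsp_def by blast

lemma subsp_uminus: "subsp M \<Longrightarrow> x \<in> M \<Longrightarrow> - x \<in> M"
  using subsp_smul[of M x "-1"] by (simp add: smul_minus1)

lemma subsp_diff: "subsp M \<Longrightarrow> x \<in> M \<Longrightarrow> y \<in> M \<Longrightarrow> x - y \<in> M"
  using subsp_add[of M x "-y"] subsp_uminus by simp

lemma subsp_psum: "subsp M \<Longrightarrow> (\<And>n. v n \<in> M) \<Longrightarrow> psum v N \<in> M"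
  by (induction N) (auto simp: psum_Suc subsp_zero subsp_add)

lemma subsp_l2_UNIV: "subsp l2"
  unfolding subsp_def by auto

lemma sclosed_l2: "sclosed l2"
  unfolding sclosed_def using series_bound by blast

lemma orth_l2: "orth S \<subseteq> l2"
  unfolding orth_def by auto

lemma subsp_orth: "S \<subseteq> l2 \<Longrightarrow> subsp (orth S)"
  unfolding subsp_def orth_def
  by (auto simp: cinner_add_right cinner_smul_right subset_iff)

lemma cinner_psum_right: "x \<in> l2 \<Longrightarrow> (\<And>n. v n \<in> l2) \<Longrightarrow> cinner x (psum v N) = (\<Sum>n<N. cinner x (v n))"
  by (induction N) (auto simp: psum_Suc cinner_add_right psum_l2)

lemma cinner_series_right:
  assumes x: "x \<in> l2" and v: "\<And>n. v n \<in> l2" and s: "summable (\<lambda>n. l2norm (v n))"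
  shows "(\<lambda>n. cinner x (v n)) sums cinner x (ssum v)"
proof -
  have sl: "ssum v \<in> l2" using series_bound[OF v s] by blast
  have "(\<lambda>N. cinner x (psum v N) - cinner x (ssum v)) \<longlonglongrightarrow> 0"
  proof (rule tendsto_norm_zero_cancel, rule tendsto_sandwich[OF _ _ tendsto_const])
    show "\<forall>\<^sub>F n in sequentially. 0 \<le> norm (cinner x (psum v n) - cinner x (ssum v))" by simp
    show "\<forall>\<^sub>F n in sequentially. norm (cinner x (psum v n) - cinner x (ssum v)) \<le> l2norm x * l2norm (ssum v - psum v n)"
    proof (intro always_eventually allI)
      fix n
      have "cinner x (psum v n) - cinner x (ssum v) = - cinner x (ssum v - psum v n)"
        using x sl psum_l2[OF v] by (simp add: cinner_diff_right)
      thus "norm (cinner x (psum v n) - cinner x (ssum v)) \<le> l2norm x * l2norm (ssum v - psum v n)"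
        using cauchy_schwarz[of x "ssum v - psum v n"] x sl psum_l2[OF v] by simp
    qed
    show "(\<lambda>n. l2norm x * l2norm (ssum v - psum v n)) \<longlonglongrightarrow> 0"
      using tendsto_mult_right_zero[OF series_conv[OF v s]] .
  qed
  hence "(\<lambda>N. cinner x (psum v N)) \<longlonglongrightarrow> cinner x (ssum v)" using tendsto_add[OF _ tendsto_const[of "cinner x (ssum v)"]] by fastforce
  thus ?thesis unfolding sums_def using cinner_psum_right[OF x v] by simp
qed

lemma sclosed_orth: "S \<subseteq> l2 \<Longrightarrow> sclosed (orth S)"
  unfolding sclosed_def
proof (intro allI impI)
  fix v assume S: "S \<subseteq> l2" and a: "(\<forall>n. v n \<in> orth S) \<and> summable (\<lambda>n. l2norm (v n))"
  have v: "\<And>n. v n \<in> l2" using a orth_l2 by (auto simp: subset_iff)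
  have sl: "ssum v \<in> l2" using a by (intro series_bound(1)[OF v]) auto
  have "cinner x (ssum v) = 0" if "x \<in> S" for x
  proof -
    have "(\<lambda>n. cinner x (v n)) sums cinner x (ssum v)"
      using a S that by (intro cinner_series_right[OF _ v]) auto
    moreover have "(\<lambda>n. cinner x (v n)) = (\<lambda>n. 0)" using a that by (auto simp: orth_def)
    ultimately show ?thesis using sums_unique2[OF _ sums_zero] by simp
  qed
  thus "ssum v \<in> orth S" using sl by (auto simp: orth_def)
qed



section \<open>Bounded operators\<close>

lemma bop_maps: "bounded_op M N L \<Longrightarrow> x \<in> M \<Longrightarrow> L x \<in> N"
  unfolding bounded_op_def by blast

lemma bop_add: "bounded_op M N L \<Longrightarrow> x \<in> M \<Longrightarrow> y \<in> M \<Longrightarrow> L (x + y) = L x + L y"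
  unfolding bounded_op_def by blast

lemma bop_smul: "bounded_op M N L \<Longrightarrow> x \<in> M \<Longrightarrow> L (smul c x) = smul c (L x)"
  unfolding bounded_op_def by blast

lemma smul_0_left[simp]: "smul 0 x = 0"
  by (simp add: smul_def zero_fun_def)

lemma smul_0_right[simp]: "smul c 0 = 0"
  by (simp add: smul_def zero_fun_def)

lemma smul_1[simp]: "smul 1 x = x"
  by (simp add: smul_def)

lemma smul_add: "smul c (x + y) = smul c x + smul c y"
  by (auto simp: smul_def algebra_simps)

lemma smul_diff: "smul c (x - y) = smul c x - smul c y"
  by (auto simp: smul_def algebra_simps)

lemma smul_smul: "smul c (smul d x) = smul (c * d) x"
  by (auto simp: smul_def)

lemma smul_add_left: "smul (c + d) x = smul c x + smul d x"
  by (auto simp: smul_def algebra_simps)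

lemma smul_apply[simp]: "smul c x k = c * x k"
  by (simp add: smul_def)

lemma bop_zero: "bounded_op M N L \<Longrightarrow> subsp M \<Longrightarrow> L 0 = 0"
  using bop_smul[of M N L 0 0] subsp_zero by fastforce

lemma bop_uminus: "bounded_op M N L \<Longrightarrow> x \<in> M \<Longrightarrow> L (- x) = - L x"
  using bop_smul[of M N L x "-1"] by (simp add: smul_minus1)

lemma bop_diff: "bounded_op M N L \<Longrightarrow> subsp M \<Longrightarrow> x \<in> M \<Longrightarrow> y \<in> M \<Longrightarrow> L (x - y) = L x - L y"
  using bop_add[of M N L x "-y"] bop_uminus[of M N L y] subsp_uminus[of M y] by simp

lemma bop_psum: "bounded_op M N L \<Longrightarrow> subsp M \<Longrightarrow> (\<And>n. v n \<in> M) \<Longrightarrow> L (psum v K) = psum (\<lambda>n. L (v n)) K"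
  by (induction K) (auto simp: psum_Suc bop_add subsp_psum bop_zero)

lemma bop_bound:
  assumes "bounded_op M N L" "subsp M" "subsp N"
  obtains C where "0 \<le> C" "\<And>x. x \<in> M \<Longrightarrow> l2norm (L x) \<le> C * l2norm x"
proof -
  obtain C where C: "\<forall>x\<in>M. l2norm (L x) \<le> C * l2norm x" using assms(1) unfolding bounded_op_def by blast
  have "l2norm (L x) \<le> max C 0 * l2norm x" if "x \<in> M" for x
  proof -
    have "C * l2norm x \<le> max C 0 * l2norm x"
      using that assms(2) subsp_l2 by (intro mult_right_mono) auto
    thus ?thesis using C that by force
  qed
  thus ?thesis using that[of "max C 0"] by auto
qed

lemma bop_series:
  assumes L: "bounded_op M N L" and M: "subsp M" "sclosed M" and N: "subsp N"
    and v: "\<And>n. v n \<in> M" and s: "summable (\<lambda>n. l2norm (v n))"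
  shows "(\<lambda>n. L (v n) k) sums L (ssum v) k"
proof -
  obtain C where C: "0 \<le> C" "\<And>x. x \<in> M \<Longrightarrow> l2norm (L x) \<le> C * l2norm x"
    using bop_bound[OF L M(1) N] by blast
  have vl: "\<And>n. v n \<in> l2" using v M subsp_l2 by blast
  have sM: "ssum v \<in> M" using M(2) v s unfolding sclosed_def by blast
  have pM: "\<And>K. psum v K \<in> M" using subsp_psum[OF M(1) v] .
  have "(\<lambda>K. L (psum v K) k) \<longlonglongrightarrow> L (ssum v) k"
  proof (rule conv_coord)
    show "\<And>K. L (psum v K) \<in> l2" using pM bop_maps[OF L] N subsp_l2 by blast
    show "L (ssum v) \<in> l2" using sM bop_maps[OF L] N subsp_l2 by blast
    show "(\<lambda>K. l2norm (L (psum v K) - L (ssum v))) \<longlonglongrightarrow> 0"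
    proof (rule tendsto_sandwich[OF _ _ tendsto_const])
      show "\<forall>\<^sub>F K in sequentially. 0 \<le> l2norm (L (psum v K) - L (ssum v))"
        using pM sM bop_maps[OF L] N subsp_l2 by (auto intro!: always_eventually l2norm_nonneg l2_diff)
      show "\<forall>\<^sub>F K in sequentially. l2norm (L (psum v K) - L (ssum v)) \<le> C * l2norm (ssum v - psum v K)"
      proof (rule always_eventually, rule allI)
        fix K
        have "l2norm (L (psum v K) - L (ssum v)) = l2norm (L (ssum v - psum v K))"
          using bop_diff[OF L M(1) sM pM[of K]] l2norm_minus_commute by simp
        also have "\<dots> \<le> C * l2norm (ssum v - psum v K)"
          using C(2) subsp_diff[OF M(1) sM pM] by blast
        finally show "l2norm (L (psum v K) - L (ssum v)) \<le> C * l2norm (ssum v - psum v K)" .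
      qed
      show "(\<lambda>K. C * l2norm (ssum v - psum v K)) \<longlonglongrightarrow> 0"
        using tendsto_mult_right_zero[OF series_conv[OF vl s]] .
    qed
  qed
  thus ?thesis unfolding sums_def using bop_psum[OF L M(1) v] by (simp add: psum_def)
qed

lemma bop_ssum:
  assumes L: "bounded_op M N L" and M: "subsp M" "sclosed M" and N: "subsp N"
    and v: "\<And>n. v n \<in> M" and s: "summable (\<lambda>n. l2norm (v n))"
  shows "L (ssum v) = ssum (\<lambda>n. L (v n))"
  using bop_series[OF assms] sums_unique unfolding ssum_def by (auto simp: fun_eq_iff)

lemma bop_comp: "bounded_op M N L1 \<Longrightarrow> bounded_op N P L2 \<Longrightarrow> subsp M \<Longrightarrow> subsp N \<Longrightarrow> subsp P \<Longrightarrow> bounded_op M P (\<lambda>x. L2 (L1 x))"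
proof -
  assume a: "bounded_op M N L1" "bounded_op N P L2" "subsp M" "subsp N" "subsp P"
  obtain C1 where C1: "0 \<le> C1" "\<And>x. x \<in> M \<Longrightarrow> l2norm (L1 x) \<le> C1 * l2norm x" using bop_bound[OF a(1,3,4)] by blast
  obtain C2 where C2: "0 \<le> C2" "\<And>x. x \<in> N \<Longrightarrow> l2norm (L2 x) \<le> C2 * l2norm x" using bop_bound[OF a(2,4,5)] by blast
  have "l2norm (L2 (L1 x)) \<le> (C2 * C1) * l2norm x" if "x \<in> M" for x
  proof -
    have "l2norm (L2 (L1 x)) \<le> C2 * l2norm (L1 x)" using C2 bop_maps[OF a(1) that] by blast
    also have "\<dots> \<le> C2 * (C1 * l2norm x)" using C1(2)[OF that] C2(1) by (rule mult_left_mono)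
    finally show ?thesis by simp
  qed
  thus ?thesis using a unfolding bounded_op_def by (auto simp: bop_maps)
qed

lemma bop_funpow: "bounded_op M M C \<Longrightarrow> subsp M \<Longrightarrow> bounded_op M M (C ^^ n)"
proof (induction n)
  case 0 then show ?case unfolding bounded_op_def by (auto intro: exI[of _ 1])
next
  case (Suc n)
  then show ?case using bop_comp[of M M "C ^^ n" M C] by (simp add: comp_def)
qed

lemma funpow_contr:
  assumes "bounded_op M M C" "\<And>x. x \<in> M \<Longrightarrow> l2norm (C x) \<le> r * l2norm x" "0 \<le> r"
  shows "x \<in> M \<Longrightarrow> l2norm ((C ^^ n) x) \<le> r ^ n * l2norm x"
proof (induction n)
  case 0 then show ?case by simp
next
  case (Suc n)
  have "(C ^^ n) x \<in> M" using Suc.prems assms(1)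
    by (induction n) (auto simp: bop_maps)
  hence "l2norm ((C ^^ Suc n) x) \<le> r * l2norm ((C ^^ n) x)" using assms(2) by simp
  also have "\<dots> \<le> r * (r ^ n * l2norm x)" using Suc assms(3) by (intro mult_left_mono) auto
  finally show ?case by simp
qed

lemma funpow_maps: "bounded_op M M C \<Longrightarrow> x \<in> M \<Longrightarrow> (C ^^ n) x \<in> M"
  by (induction n) (auto simp: bop_maps)



definition unitv :: "nat \<Rightarrow> nat \<Rightarrow> complex" where
  "unitv n = (\<lambda>m. if m = n then 1 else 0)"

definition trunc :: "nat \<Rightarrow> (nat \<Rightarrow> complex) \<Rightarrow> nat \<Rightarrow> complex" where
  "trunc N x = (\<lambda>m. if m < N then x m else 0)"

lemma unitv_l2[simp]: "unitv n \<in> l2"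
  unfolding l2_def unitv_def by (auto intro!: summable_finite[of "{n}"] split: if_split_asm)

lemma trunc_eq_psum: "trunc N x = psum (\<lambda>n. smul (x n) (unitv n)) N"
  unfolding trunc_def psum_def unitv_def smul_def by (auto simp: fun_eq_iff if_distrib cong: if_cong)

lemma trunc_l2[simp]: "trunc N x \<in> l2"
  unfolding trunc_eq_psum by (rule psum_l2) simp

lemma cinner_unitv_left: "z \<in> l2 \<Longrightarrow> cinner (unitv n) z = cnj (z n)"
  unfolding cinner_def unitv_def
  by (subst suminf_finite[of "{n}"]) auto

lemma cinner_psum_left: "(\<And>n. v n \<in> l2) \<Longrightarrow> y \<in> l2 \<Longrightarrow> cinner (psum v N) y = (\<Sum>n<N. cinner (v n) y)"
  by (induction N) (auto simp: psum_Suc cinner_add_left psum_l2)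

lemma l2norm_trunc: "l2norm (trunc N z) = sqrt (\<Sum>n<N. (cmod (z n))^2)"
  unfolding l2norm_def trunc_def
  by (subst suminf_finite[of "{..<N}"]) auto

lemma sums_trunc: "(\<lambda>n. if n < N then f n else (0::'a::real_normed_vector)) sums (\<Sum>n<N. f n)"
  using sums_finite[of "{..<N}" "\<lambda>n. if n < N then f n else 0"] by simp

lemma trunc_conv:
  assumes x: "x \<in> l2" shows "(\<lambda>N. l2norm (x - trunc N x)) \<longlonglongrightarrow> 0"
proof -
  have s: "summable (\<lambda>n. (cmod (x n))^2)" using x by (simp add: l2_def)
  have eq: "l2norm (x - trunc N x) = sqrt ((\<Sum>n. (cmod (x n))^2) - (\<Sum>n<N. (cmod (x n))^2))" for N
  proof -
    have "(\<lambda>m. (cmod ((x - trunc N x) m))^2) = (\<lambda>m. if m < N then 0 else (cmod (x m))^2)"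
      by (auto simp: trunc_def fun_eq_iff)
    moreover have "(\<lambda>m. if m < N then 0 else (cmod (x m))^2) sums ((\<Sum>n. (cmod (x n))^2) - (\<Sum>n<N. (cmod (x n))^2))"
    proof -
      have "(\<lambda>m. (cmod (x m))^2 - (if m < N then (cmod (x m))^2 else 0)) sums ((\<Sum>n. (cmod (x n))^2) - (\<Sum>n<N. (cmod (x n))^2))"
        by (intro sums_diff summable_sums s sums_trunc)
      moreover have "(\<lambda>m. (cmod (x m))^2 - (if m < N then (cmod (x m))^2 else 0)) = (\<lambda>m. if m < N then 0 else (cmod (x m))^2)"
        by auto
      ultimately show ?thesis by simp
    qed
    ultimately show ?thesis unfolding l2norm_def using sums_unique by metis
  qed
  have "(\<lambda>N. sqrt ((\<Sum>n. (cmod (x n))^2) - (\<Sum>n<N. (cmod (x n))^2))) \<longlonglongrightarrow> sqrt ((\<Sum>n. (cmod (x n))^2) - (\<Sum>n. (cmod (x n))^2))"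
    by (intro tendsto_intros summable_LIMSEQ s)
  thus ?thesis unfolding eq by simp
qed

lemma adj_exists:
  assumes T: "bounded_op l2 l2 T" and y: "y \<in> l2"
  shows "\<exists>z\<in>l2. \<forall>x\<in>l2. cinner (T x) y = cinner x z"
proof -
  obtain C where C: "0 \<le> C" "\<And>x. x \<in> l2 \<Longrightarrow> l2norm (T x) \<le> C * l2norm x"
    using bop_bound[OF T subsp_l2_UNIV subsp_l2_UNIV] by blast
  define z where "z = (\<lambda>n. cnj (cinner (T (unitv n)) y))"
  have Tpsum: "T (trunc N x) = psum (\<lambda>n. smul (x n) (T (unitv n))) N" for N x
    unfolding trunc_eq_psum
    by (subst bop_psum[OF T subsp_l2_UNIV]) (auto simp: bop_smul[OF T])
  have ip: "cinner (T (trunc N x)) y = (\<Sum>n<N. x n * cinner (T (unitv n)) y)" for N x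
    unfolding Tpsum
    by (subst cinner_psum_left) (auto simp: cinner_smul_left y bop_maps[OF T])
  have bnd: "(\<Sum>n<N. (cmod (z n))^2) \<le> (C * l2norm y)^2" for N
  proof -
    define s where "s = (\<Sum>n<N. (cmod (z n))^2)"
    have s0: "0 \<le> s" unfolding s_def by (simp add: sum_nonneg)
    have "complex_of_real s = (\<Sum>n<N. z n * cnj (z n))"
      unfolding s_def by (simp add: complex_mult_cnj cmod_def)
    also have "\<dots> = cinner (T (trunc N z)) y" unfolding ip z_def by simp
    finally have "s = cmod (cinner (T (trunc N z)) y)" using s0 by (metis norm_of_real abs_of_nonneg)
    also have "\<dots> \<le> l2norm (T (trunc N z)) * l2norm y"
      by (rule cauchy_schwarz) (auto simp: y bop_maps[OF T])
    also have "\<dots> \<le> C * l2norm (trunc N z) * l2norm y"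
      using C(2)[of "trunc N z"] y by (intro mult_right_mono) auto
    also have "\<dots> = C * l2norm y * sqrt s" unfolding l2norm_trunc s_def by simp
    finally have le: "s \<le> C * l2norm y * sqrt s" .
    show ?thesis
    proof (cases "s = 0")
      case True then show ?thesis unfolding s_def by simp
    next
      case False
      hence sp: "0 < sqrt s" using s0 by simp
      have "sqrt s * sqrt s \<le> C * l2norm y * sqrt s" using le s0 by simp
      hence "sqrt s \<le> C * l2norm y" by (rule mult_right_le_imp_le[OF _ sp])
      hence "(sqrt s)^2 \<le> (C * l2norm y)^2" using sp by (intro power_mono) auto
      thus ?thesis using s0 unfolding s_def by simp
    qed
  qed
  have zl2: "z \<in> l2" unfolding l2_def
    by (auto intro!: summableI_nonneg_bounded[where x="(C * l2norm y)^2"] bnd)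
  have "cinner (T x) y = cinner x z" if x: "x \<in> l2" for x
  proof -
    have l1: "(\<lambda>N. cinner (T (trunc N x)) y) \<longlonglongrightarrow> cinner x z"
    proof -
      have "(\<lambda>N. \<Sum>n<N. x n * cnj (z n)) \<longlonglongrightarrow> cinner x z"
        unfolding cinner_def by (rule summable_LIMSEQ[OF cinner_summable[OF x zl2]])
      thus ?thesis unfolding ip z_def by simp
    qed
    have l2: "(\<lambda>N. cinner (T (trunc N x)) y) \<longlonglongrightarrow> cinner (T x) y"
    proof -
      have "(\<lambda>N. cinner (T (trunc N x)) y - cinner (T x) y) \<longlonglongrightarrow> 0"
      proof (rule tendsto_norm_zero_cancel, rule tendsto_sandwich[OF _ _ tendsto_const])
        show "\<forall>\<^sub>F N in sequentially. 0 \<le> norm (cinner (T (trunc N x)) y - cinner (T x) y)" by simp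
        show "\<forall>\<^sub>F N in sequentially. norm (cinner (T (trunc N x)) y - cinner (T x) y) \<le> C * l2norm (x - trunc N x) * l2norm y"
        proof (rule always_eventually, rule allI)
          fix N
          have "cinner (T (trunc N x)) y - cinner (T x) y = - cinner (T (x - trunc N x)) y"
            using x y by (simp add: bop_diff[OF T subsp_l2_UNIV] cinner_diff_left bop_maps[OF T])
          hence "norm (cinner (T (trunc N x)) y - cinner (T x) y) = norm (cinner (T (x - trunc N x)) y)" by simp
          also have "\<dots> \<le> l2norm (T (x - trunc N x)) * l2norm y"
            by (rule cauchy_schwarz) (auto simp: x y bop_maps[OF T])
          also have "\<dots> \<le> C * l2norm (x - trunc N x) * l2norm y"
            using C(2)[of "x - trunc N x"] x y by (intro mult_right_mono) auto
          finally show "norm (cinner (T (trunc N x)) y - cinner (T x) y) \<le> C * l2norm (x - trunc N x) * l2norm y" .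
        qed
        have "(\<lambda>N. C * l2norm (x - trunc N x) * l2norm y) \<longlonglongrightarrow> C * 0 * l2norm y"
          by (intro tendsto_intros trunc_conv x)
        thus "(\<lambda>N. C * l2norm (x - trunc N x) * l2norm y) \<longlonglongrightarrow> 0" by simp
      qed
      thus ?thesis using tendsto_add[OF _ tendsto_const[of "cinner (T x) y"]] by fastforce
    qed
    show ?thesis using LIMSEQ_unique[OF l2 l1] .
  qed
  thus ?thesis using zl2 by blast
qed

lemma cinner_unique:
  assumes M: "subsp M" and z: "z \<in> M" "z' \<in> M" and eq: "\<And>x. x \<in> M \<Longrightarrow> cinner x z = cinner x z'"
  shows "z = z'"
proof -
  have d: "z - z' \<in> M" using subsp_diff[OF M z] .
  have "cinner (z - z') (z - z') = 0"
    using eq[OF d] d z M subsp_l2 by (simp add: cinner_diff_right)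
  thus ?thesis using cinner_eq_zero_all d M subsp_l2 by fastforce
qed

lemma adj_on_eq:
  assumes M: "subsp M" and y: "y \<in> N" and z: "z \<in> M" and eq: "\<And>x. x \<in> M \<Longrightarrow> cinner (T x) y = cinner x z"
  shows "adj_on M N T y = z"
proof -
  have "(THE z. z \<in> M \<and> (\<forall>x\<in>M. cinner (T x) y = cinner x z)) = z"
  proof (rule the_equality)
    show "z \<in> M \<and> (\<forall>x\<in>M. cinner (T x) y = cinner x z)" using z eq by blast
    fix z' assume h: "z' \<in> M \<and> (\<forall>x\<in>M. cinner (T x) y = cinner x z')"
    show "z' = z"
    proof (rule cinner_unique[OF M])
      show "z' \<in> M" using h by blast
      show "z \<in> M" using z .
      fix x assume "x \<in> M"
      thus "cinner x z' = cinner x z" using h eq[of x] by simp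
    qed
  qed
  thus ?thesis unfolding adj_on_def using y by simp
qed

lemma adj_props:
  assumes T: "bounded_op l2 l2 T" and y: "y \<in> l2"
  shows "adj T y \<in> l2" "\<And>x. x \<in> l2 \<Longrightarrow> cinner (T x) y = cinner x (adj T y)"
proof -
  obtain z where z: "z \<in> l2" "\<forall>x\<in>l2. cinner (T x) y = cinner x z" using adj_exists[OF T y] by blast
  have "adj T y = z" using adj_on_eq[OF subsp_l2_UNIV y z(1)] z(2) by blast
  thus "adj T y \<in> l2" "\<And>x. x \<in> l2 \<Longrightarrow> cinner (T x) y = cinner x (adj T y)" using z by auto
qed

lemma sq_le_mult_imp: "0 \<le> (a::real) \<Longrightarrow> a^2 \<le> a * b \<Longrightarrow> 0 \<le> b \<Longrightarrow> a \<le> b"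
  by (cases "a = 0") (auto simp: power2_eq_square)

lemma adj_bop:
  assumes T: "bounded_op l2 l2 T" and Tc: "\<And>x. x \<in> l2 \<Longrightarrow> l2norm (T x) \<le> l2norm x"
  shows "bounded_op l2 l2 (adj T)" "\<And>y. y \<in> l2 \<Longrightarrow> l2norm (adj T y) \<le> l2norm y"
proof -
  have A: "adj T y \<in> l2" "\<And>x. x \<in> l2 \<Longrightarrow> cinner (T x) y = cinner x (adj T y)" if "y \<in> l2" for y
    using adj_props[OF T that] by auto
  have nb: "l2norm (adj T y) \<le> l2norm y" if y: "y \<in> l2" for y
  proof -
    have a: "adj T y \<in> l2" using A y by blast
    have "(l2norm (adj T y))^2 = Re (cinner (adj T y) (adj T y))" using a by (simp add: l2norm_sq_cinner)
    also have "\<dots> = Re (cinner (T (adj T y)) y)" using A(2)[OF y a] by simp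
    also have "\<dots> \<le> l2norm (T (adj T y)) * l2norm y"
      using cauchy_schwarz[of "T (adj T y)" y] y a bop_maps[OF T] complex_Re_le_cmod order_trans by blast
    also have "\<dots> \<le> l2norm (adj T y) * l2norm y" using Tc[OF a] y by (intro mult_right_mono) auto
    finally have "(l2norm (adj T y))^2 \<le> l2norm (adj T y) * l2norm y" .
    thus ?thesis using a y sq_le_mult_imp by simp
  qed
  show "\<And>y. y \<in> l2 \<Longrightarrow> l2norm (adj T y) \<le> l2norm y" using nb .
  have add: "adj T (y1 + y2) = adj T y1 + adj T y2" if "y1 \<in> l2" "y2 \<in> l2" for y1 y2
  proof (rule adj_on_eq[OF subsp_l2_UNIV])
    show "y1 + y2 \<in> l2" "adj T y1 + adj T y2 \<in> l2" using that A by auto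
    fix x assume x: "x \<in> l2"
    have "cinner (T x) (y1 + y2) = cinner (T x) y1 + cinner (T x) y2"
      using that x bop_maps[OF T x] by (simp add: cinner_add_right)
    also have "\<dots> = cinner x (adj T y1) + cinner x (adj T y2)" using A(2)[OF that(1) x] A(2)[OF that(2) x] by simp
    also have "\<dots> = cinner x (adj T y1 + adj T y2)" using that x A by (simp add: cinner_add_right)
    finally show "cinner (T x) (y1 + y2) = cinner x (adj T y1 + adj T y2)" .
  qed
  have sm: "adj T (smul c y) = smul c (adj T y)" if "y \<in> l2" for c y
  proof (rule adj_on_eq[OF subsp_l2_UNIV])
    show "smul c y \<in> l2" "smul c (adj T y) \<in> l2" using that A by auto
    fix x assume x: "x \<in> l2"
    have "cinner (T x) (smul c y) = cnj c * cinner (T x) y"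
      using that x bop_maps[OF T x] by (simp add: cinner_smul_right)
    also have "\<dots> = cnj c * cinner x (adj T y)" using A(2)[OF that x] by simp
    also have "\<dots> = cinner x (smul c (adj T y))" using that x A by (simp add: cinner_smul_right)
    finally show "cinner (T x) (smul c y) = cinner x (smul c (adj T y))" .
  qed
  show "bounded_op l2 l2 (adj T)"
    unfolding bounded_op_def using A add sm nb by (auto intro!: exI[of _ 1])
qed



lemma double_series:
  fixes f g v :: "nat \<Rightarrow> complex"
  assumes f: "summable (\<lambda>n. cmod (f n))" and g: "summable (\<lambda>n. cmod (g n))"
    and v: "\<And>m. cmod (v m) \<le> V"
  shows "(\<Sum>i. f i * (\<Sum>j. g j * v (i + j))) = (\<Sum>m. (\<Sum>i\<le>m. f i * g (m - i)) * v m)"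
proof -
  define w where "w = (\<lambda>(i, j). f i * g j * v (i + j))"
  have V0: "0 \<le> V" using v[of 0] norm_ge_zero order_trans by blast
  define G where "G = (\<Sum>j. cmod (g j))"
  have F_hs: "((\<lambda>(i,j). cmod (f i) * cmod (g j) * V) summable_on Sigma UNIV (\<lambda>_. UNIV))"
  proof (rule summable_on_SigmaI[where g="\<lambda>i. cmod (f i) * G * V"])
    fix i :: nat
    have "(\<lambda>j. cmod (f i) * cmod (g j) * V) sums (cmod (f i) * G * V)"
      unfolding G_def using summable_sums[OF g] by (intro sums_mult sums_mult2) 
    thus "((\<lambda>y. (\<lambda>(i, j). cmod (f i) * cmod (g j) * V) (i, y)) has_sum cmod (f i) * G * V) UNIV"
      using g V0 by (auto intro!: norm_summable_imp_has_sum summable_mult summable_mult2 simp: abs_mult)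
  next
    show "(\<lambda>i. cmod (f i) * G * V) summable_on UNIV"
      using f V0 by (auto intro!: norm_summable_imp_summable_on summable_mult2 simp: abs_mult)
  qed (use V0 in auto)
  have wabs: "w abs_summable_on UNIV"
  proof -
    have "(\<lambda>p. norm (w p)) summable_on Sigma UNIV (\<lambda>_. UNIV)"
    proof (rule abs_summable_on_comparison_test'[OF F_hs])
      fix p :: "nat \<times> nat" 
      obtain i j where p: "p = (i, j)" by (cases p)
      have "norm (w p) = cmod (f i) * cmod (g j) * cmod (v (i + j))" by (simp add: w_def p norm_mult)
      also have "\<dots> \<le> cmod (f i) * cmod (g j) * V" by (intro mult_left_mono v) auto
      finally show "norm (w p) \<le> (\<lambda>(i,j). cmod (f i) * cmod (g j) * V) p" by (simp add: p)
    qed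
    thus ?thesis by simp
  qed
  have wsum: "w summable_on UNIV" using abs_summable_summable[OF wabs] .
  define W where "W = infsum w UNIV"
  have hs: "(w has_sum W) (Sigma UNIV (\<lambda>_. UNIV))" unfolding W_def using wsum by simp
  have inner: "(\<lambda>j. g j * v (i + j)) sums (\<Sum>j. g j * v (i + j))" and
       innern: "summable (\<lambda>j. norm (g j * v (i + j)))" for i
  proof -
    show "summable (\<lambda>j. norm (g j * v (i + j)))"
      by (rule summable_comparison_test'[where g="\<lambda>j. cmod (g j) * V"]) 
         (use summable_mult2[OF g, of V] in simp, simp add: norm_mult mult_left_mono[OF v])
    thus "(\<lambda>j. g j * v (i + j)) sums (\<Sum>j. g j * v (i + j))"
      by (rule summable_sums[OF summable_norm_cancel])
  qed
  have A: "((\<lambda>i. f i * (\<Sum>j. g j * v (i + j))) has_sum W) UNIV"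
  proof (rule has_sum_Sigma'[OF hs])
    fix i :: nat assume "i \<in> UNIV"
    have "(\<lambda>j. f i * (g j * v (i + j))) sums (f i * (\<Sum>j. g j * v (i + j)))"
      by (rule sums_mult[OF inner])
    moreover have "summable (\<lambda>j. norm (f i * (g j * v (i + j))))"
      using summable_mult[OF innern[of i], of "cmod (f i)"] by (simp add: norm_mult)
    ultimately have "((\<lambda>j. f i * (g j * v (i + j))) has_sum (f i * (\<Sum>j. g j * v (i + j)))) UNIV"
      by (intro norm_summable_imp_has_sum)
    thus "((\<lambda>y. w (i, y)) has_sum f i * (\<Sum>j. g j * v (i + j))) UNIV"
      by (simp add: w_def mult.assoc)
  qed
  define h where "h = (\<lambda>(m::nat, i::nat). (i, m - i))"
  have bij: "bij_betw h (Sigma UNIV (\<lambda>m. {..m})) UNIV"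
    by (rule bij_betw_byWitness[where f'="\<lambda>(i, j). (i + j, i)"]) (auto simp: h_def image_def)
  have hs2: "((\<lambda>p. w (h p)) has_sum W) (Sigma UNIV (\<lambda>m. {..m}))"
    using has_sum_reindex_bij_betw[OF bij, of w W] hs by simp
  have B: "((\<lambda>m. (\<Sum>i\<le>m. f i * g (m - i)) * v m) has_sum W) UNIV"
  proof (rule has_sum_Sigma'[OF hs2])
    fix m :: nat assume "m \<in> UNIV"
    have "(\<Sum>i\<le>m. f i * g (m - i)) * v m = (\<Sum>i\<le>m. w (h (m, i)))"
      by (auto simp: w_def h_def sum_distrib_right intro!: sum.cong)
    thus "((\<lambda>y. w (h (m, y))) has_sum (\<Sum>i\<le>m. f i * g (m - i)) * v m) {..m}"
      by (intro has_sum_finiteI) auto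
  qed
  show ?thesis
    using sums_unique[OF has_sum_imp_sums[OF A]] sums_unique[OF has_sum_imp_sums[OF B]] by simp
qed



definition Fs :: "(vec \<Rightarrow> vec) \<Rightarrow> (nat \<Rightarrow> complex) \<Rightarrow> vec \<Rightarrow> vec" where
  "Fs C f x = ssum (\<lambda>n. smul (f n) ((C ^^ n) x))"

definition cprod :: "(nat \<Rightarrow> complex) \<Rightarrow> (nat \<Rightarrow> complex) \<Rightarrow> nat \<Rightarrow> complex" where
  "cprod f g = (\<lambda>m. \<Sum>i\<le>m. f i * g (m - i))"

lemma acoef_cprod:
  assumes f: "summable (\<lambda>n. cmod (f n))" and g: "summable (\<lambda>n. cmod (g n))"
  shows "summable (\<lambda>n. cmod (cprod f g n))"
proof -
  have "(\<lambda>k. \<Sum>i\<le>k. cmod (f i) * cmod (g (k - i))) sums ((\<Sum>k. cmod (f k)) * (\<Sum>k. cmod (g k)))"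
    by (rule Cauchy_product_sums) (use f g in simp_all)
  hence s: "summable (\<lambda>k. \<Sum>i\<le>k. cmod (f i) * cmod (g (k - i)))" by (rule sums_summable)
  show ?thesis
  proof (rule summable_comparison_test'[OF s])
    fix n
    show "norm (cmod (cprod f g n)) \<le> (\<Sum>i\<le>n. cmod (f i) * cmod (g (n - i)))"
      unfolding cprod_def using norm_sum[of "\<lambda>i. f i * g (n - i)" "{..n}"] by (simp add: norm_mult)
  qed
qed

lemma Fs_comm:
  assumes L: "bounded_op M N L" and M: "subsp M" "sclosed M" and N: "subsp N"
    and C: "bounded_op M M C" and comm: "\<And>x. x \<in> M \<Longrightarrow> L (C x) = C' (L x)"
    and x: "x \<in> M" and s: "summable (\<lambda>n. l2norm (smul (f n) ((C ^^ n) x)))"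
  shows "L (Fs C f x) = Fs C' f (L x)"
proof -
  have pw: "L ((C ^^ n) x) = (C' ^^ n) (L x)" for n
  proof (induction n)
    case 0 then show ?case by simp
  next
    case (Suc n)
    have "L ((C ^^ Suc n) x) = L (C ((C ^^ n) x))" by simp
    also have "\<dots> = C' (L ((C ^^ n) x))" using comm funpow_maps[OF C x] by blast
    finally show ?case using Suc by simp
  qed
  have "L (Fs C f x) = ssum (\<lambda>n. L (smul (f n) ((C ^^ n) x)))"
    unfolding Fs_def
    by (rule bop_ssum[OF L M N]) (use subsp_smul[OF M(1) funpow_maps[OF C x]] s in auto)
  also have "\<dots> = ssum (\<lambda>n. smul (f n) ((C' ^^ n) (L x)))"
    using bop_smul[OF L funpow_maps[OF C x]] pw by simp
  finally show ?thesis unfolding Fs_def .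
qed

locale contr =
  fixes M :: "vec set" and C :: "vec \<Rightarrow> vec"
  assumes M: "subsp M" "sclosed M" and C: "bounded_op M M C"
    and Cc: "\<And>x. x \<in> M \<Longrightarrow> l2norm (C x) \<le> l2norm x"
begin

lemma pw_in: "x \<in> M \<Longrightarrow> (C ^^ n) x \<in> M"
  by (rule funpow_maps[OF C])

lemma pw_le: "x \<in> M \<Longrightarrow> l2norm ((C ^^ n) x) \<le> l2norm x"
  using funpow_contr[OF C, of 1 x n] Cc by simp

lemma inM_l2: "x \<in> M \<Longrightarrow> x \<in> l2"
  using M(1) subsp_l2 by blast

lemma terms_in: "x \<in> M \<Longrightarrow> smul (f n) ((C ^^ n) x) \<in> M"
  using subsp_smul[OF M(1) pw_in] .

lemma terms_summ:
  assumes f: "summable (\<lambda>n. cmod (f n))" and x: "x \<in> M"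
  shows "summable (\<lambda>n. l2norm (smul (f n) ((C ^^ n) x)))"
proof (rule summable_comparison_test'[where g="\<lambda>n. cmod (f n) * l2norm x"])
  show "summable (\<lambda>n. cmod (f n) * l2norm x)" using summable_mult2[OF f] .
  fix n
  have "l2norm (smul (f n) ((C ^^ n) x)) = cmod (f n) * l2norm ((C ^^ n) x)"
    by (rule l2norm_smul[OF inM_l2[OF pw_in[OF x]]])
  also have "\<dots> \<le> cmod (f n) * l2norm x" using pw_le[OF x] by (intro mult_left_mono) auto
  finally show "norm (l2norm (smul (f n) ((C ^^ n) x))) \<le> cmod (f n) * l2norm x"
    using inM_l2[OF terms_in[OF x]] by simp
qed

lemma Fs_in: "summable (\<lambda>n. cmod (f n)) \<Longrightarrow> x \<in> M \<Longrightarrow> Fs C f x \<in> M"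
  using M(2) terms_in[of x f] terms_summ[of f x] unfolding sclosed_def Fs_def by simp

lemma Fs_bound:
  assumes f: "summable (\<lambda>n. cmod (f n))" and x: "x \<in> M"
  shows "l2norm (Fs C f x) \<le> (\<Sum>n. cmod (f n)) * l2norm x"
proof -
  have "l2norm (Fs C f x) \<le> (\<Sum>n. l2norm (smul (f n) ((C ^^ n) x)))"
    unfolding Fs_def by (rule series_bound(2)) (use terms_summ[OF f x] inM_l2[OF terms_in[OF x]] in auto)
  also have "\<dots> \<le> (\<Sum>n. cmod (f n) * l2norm x)"
  proof (rule suminf_le)
    fix n
    have "l2norm (smul (f n) ((C ^^ n) x)) = cmod (f n) * l2norm ((C ^^ n) x)"
      by (rule l2norm_smul[OF inM_l2[OF pw_in[OF x]]])
    also have "\<dots> \<le> cmod (f n) * l2norm x" using pw_le[OF x] by (intro mult_left_mono) auto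
    finally show "l2norm (smul (f n) ((C ^^ n) x)) \<le> cmod (f n) * l2norm x" .
  qed (use terms_summ[OF f x] summable_mult2[OF f] in auto)
  also have "\<dots> = (\<Sum>n. cmod (f n)) * l2norm x" by (rule suminf_mult2[OF f, symmetric])
  finally show ?thesis .
qed

lemma Fs_coord_sums:
  assumes f: "summable (\<lambda>n. cmod (f n))" and x: "x \<in> M"
  shows "(\<lambda>n. f n * (C ^^ n) x k) sums Fs C f x k"
proof -
  have "summable (\<lambda>n. norm (smul (f n) ((C ^^ n) x) k))"
    by (rule coord_summable[where v="\<lambda>n. smul (f n) ((C ^^ n) x)", OF inM_l2[OF terms_in[OF x, of f]] terms_summ[OF f x]])
  hence "summable (\<lambda>n. smul (f n) ((C ^^ n) x) k)" by (rule summable_norm_cancel)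
  thus ?thesis unfolding Fs_def ssum_def by (simp add: summable_sums)
qed

lemma Fs_add:
  assumes f: "summable (\<lambda>n. cmod (f n))" and x: "x \<in> M" and y: "y \<in> M"
  shows "Fs C f (x + y) = Fs C f x + Fs C f y"
proof (rule ext)
  fix k
  have "(\<lambda>n. f n * (C ^^ n) x k + f n * (C ^^ n) y k) sums (Fs C f x k + Fs C f y k)"
    by (intro sums_add Fs_coord_sums f x y)
  moreover have "(\<lambda>n. f n * (C ^^ n) (x + y) k) = (\<lambda>n. f n * (C ^^ n) x k + f n * (C ^^ n) y k)"
    using bop_add[OF bop_funpow[OF C M(1)] x y] by (auto simp: algebra_simps)
  moreover have "(\<lambda>n. f n * (C ^^ n) (x + y) k) sums Fs C f (x + y) k"
    by (rule Fs_coord_sums[OF f subsp_add[OF M(1) x y]])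
  ultimately have "Fs C f (x + y) k = Fs C f x k + Fs C f y k"
    using sums_unique2 by simp
  thus "Fs C f (x + y) k = (Fs C f x + Fs C f y) k" by simp
qed

lemma Fs_smul:
  assumes f: "summable (\<lambda>n. cmod (f n))" and x: "x \<in> M"
  shows "Fs C f (smul c x) = smul c (Fs C f x)"
proof (rule ext)
  fix k
  have "(\<lambda>n. c * (f n * (C ^^ n) x k)) sums (c * Fs C f x k)"
    by (intro sums_mult Fs_coord_sums f x)
  moreover have "(\<lambda>n. f n * (C ^^ n) (smul c x) k) = (\<lambda>n. c * (f n * (C ^^ n) x k))"
    using bop_smul[OF bop_funpow[OF C M(1)] x] by (auto simp: algebra_simps)
  moreover have "(\<lambda>n. f n * (C ^^ n) (smul c x) k) sums Fs C f (smul c x) k"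
    by (rule Fs_coord_sums[OF f subsp_smul[OF M(1) x]])
  ultimately have "Fs C f (smul c x) k = c * Fs C f x k"
    using sums_unique2 by simp
  thus "Fs C f (smul c x) k = smul c (Fs C f x) k" by simp
qed

lemma Fs_bop:
  assumes f: "summable (\<lambda>n. cmod (f n))"
  shows "bounded_op M M (Fs C f)"
  unfolding bounded_op_def using Fs_in[OF f] Fs_add[OF f] Fs_smul[OF f] Fs_bound[OF f] by (intro conjI ballI allI exI[of _ "\<Sum>n. cmod (f n)"]) auto

lemma Fs_mult:
  assumes f: "summable (\<lambda>n. cmod (f n))" and g: "summable (\<lambda>n. cmod (g n))" and x: "x \<in> M"
  shows "Fs C f (Fs C g x) = Fs C (cprod f g) x"
proof (rule ext)
  fix k
  have inner: "(C ^^ i) (Fs C g x) = Fs C g ((C ^^ i) x)" for i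
    by (rule Fs_comm[OF bop_funpow[OF C M(1)] M M(1) C _ x terms_summ[OF g x]])
       (simp add: funpow_swap1)
  have inner2: "Fs C g ((C ^^ i) x) k = (\<Sum>j. g j * (C ^^ (i + j)) x k)" for i
  proof -
    have "(\<lambda>j. g j * (C ^^ j) ((C ^^ i) x) k) sums Fs C g ((C ^^ i) x) k"
      by (rule Fs_coord_sums[OF g pw_in[OF x]])
    moreover have "(C ^^ j) ((C ^^ i) x) = (C ^^ (i + j)) x" for j
      by (subst add.commute) (simp add: funpow_add)
    ultimately show ?thesis using sums_unique by simp
  qed
  have "Fs C f (Fs C g x) k = (\<Sum>i. f i * (C ^^ i) (Fs C g x) k)"
    using sums_unique[OF Fs_coord_sums[OF f Fs_in[OF g x]]] by simp
  also have "\<dots> = (\<Sum>i. f i * (\<Sum>j. g j * (C ^^ (i + j)) x k))"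
    using inner inner2 by simp
  also have "\<dots> = (\<Sum>m. (\<Sum>i\<le>m. f i * g (m - i)) * (C ^^ m) x k)"
  proof (rule double_series[OF f g])
    fix m show "cmod ((C ^^ m) x k) \<le> l2norm x"
      using coord_le_l2norm[OF inM_l2[OF pw_in[OF x]], of m k] pw_le[OF x, of m] by linarith
  qed
  also have "\<dots> = Fs C (cprod f g) x k"
    using sums_unique[OF Fs_coord_sums[OF acoef_cprod[OF f g] x]] by (simp add: cprod_def)
  finally show "Fs C f (Fs C g x) k = Fs C (cprod f g) x k" .
qed

end



definition bc :: "nat \<Rightarrow> complex" where
  "bc n = complex_of_real ((1/2::real) gchoose n)"

lemma sgn2: "0 \<le> ((-1/2::real) gchoose m) * (-1)^m"
proof -
  have "((-1/2::real) gchoose m) = (-1)^m * ((of_nat m - (-1/2) - 1) gchoose m)"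
    by (rule gbinomial_negated_upper)
  hence e: "((-1/2::real) gchoose m) * (-1)^m = ((of_nat m - 1/2) gchoose m)"
    by (simp add: power_mult_distrib[symmetric] mult.commute)
  have "0 \<le> ((of_nat m - 1/2::real) gchoose m)"
    unfolding gbinomial_altdef_of_nat by (intro prod_nonneg) auto
  thus ?thesis using e by simp
qed

lemma sgn1: "k \<ge> 1 \<Longrightarrow> ((1/2::real) gchoose k) * (-1)^k \<le> 0"
proof -
  assume k: "k \<ge> 1"
  have "((1/2::real) gchoose k) = ((1/2) / of_nat k) * ((1/2 - 1) gchoose (k - 1))"
    using k by (intro gbinomial_absorption') auto
  hence "((1/2::real) gchoose k) * (-1)^k = - ((1/2) / of_nat k) * (((-1/2) gchoose (k - 1)) * (-1)^(k-1))"
    using k by (cases k) (auto simp: algebra_simps)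
  moreover have "0 \<le> ((1/2::real) / of_nat k) * (((-1/2) gchoose (k - 1)) * (-1)^(k-1))"
    using sgn2[of "k - 1"] by simp
  ultimately show ?thesis by simp
qed

lemma absb: "\<bar>(1/2::real) gchoose k\<bar> = (if k = 0 then 2 else 0) - ((1/2::real) gchoose k) * (-1)^k"
proof (cases "k = 0")
  case True then show ?thesis by simp
next
  case False
  hence s: "((1/2::real) gchoose k) * (-1)^k \<le> 0" using sgn1 by simp
  have "\<bar>(1/2::real) gchoose k\<bar> = \<bar>((1/2::real) gchoose k) * (-1)^k\<bar>" by (simp add: abs_mult)
  also have "\<dots> = - (((1/2::real) gchoose k) * (-1)^k)" using s by simp
  finally show ?thesis using False by simp
qed

lemma psum_absb: "(\<Sum>k\<le>m. \<bar>(1/2::real) gchoose k\<bar>) = 2 - ((-1/2::real) gchoose m) * (-1)^m"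
proof -
  have "(\<Sum>k\<le>m. \<bar>(1/2::real) gchoose k\<bar>) = (\<Sum>k\<le>m. (if k = 0 then 2 else 0)) - (\<Sum>k\<le>m. ((1/2::real) gchoose k) * (-1)^k)"
    by (simp add: absb sum_subtractf)
  also have "(\<Sum>k\<le>m. (if k = 0 then 2 else (0::real))) = 2" by (simp add: sum.delta)
  also have "(\<Sum>k\<le>m. ((1/2::real) gchoose k) * (-1)^k) = (-1)^m * ((1/2 - 1) gchoose m)"
    by (rule gbinomial_sum_lower_neg)
  finally show ?thesis by (simp add: mult.commute)
qed

lemma psum_absb_le: "(\<Sum>k\<le>m. \<bar>(1/2::real) gchoose k\<bar>) \<le> 2"
  using psum_absb[of m] sgn2[of m] by simp

lemma bc_summable: "summable (\<lambda>n. cmod (bc n))"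
proof (rule summableI_nonneg_bounded[where x=2])
  fix n
  show "(\<Sum>k<n. cmod (bc k)) \<le> 2"
  proof (cases n)
    case 0 then show ?thesis by simp
  next
    case (Suc m)
    have "(\<Sum>k<n. cmod (bc k)) = (\<Sum>k\<le>m. \<bar>(1/2::real) gchoose k\<bar>)"
      unfolding Suc bc_def lessThan_Suc_atMost by simp
    thus ?thesis using psum_absb_le by simp
  qed
qed simp

lemma bc_0: "bc 0 = 1"
  by (simp add: bc_def)

lemma bc_tail_le: "(\<Sum>n. cmod (bc (Suc n))) \<le> 1"
proof (rule suminf_le_const)
  show "summable (\<lambda>n. cmod (bc (Suc n)))"
    using bc_summable summable_iff_shift[where f="\<lambda>n. cmod (bc n)" and k=1] by simp
  fix N
  have "(\<Sum>n<Suc N. cmod (bc n)) = cmod (bc 0) + (\<Sum>n<N. cmod (bc (Suc n)))"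
    by (rule sum.lessThan_Suc_shift)
  moreover have "(\<Sum>n<Suc N. cmod (bc n)) \<le> 2 - ((-1/2::real) gchoose N) * (-1)^N"
    unfolding lessThan_Suc_atMost bc_def using psum_absb[of N] by simp
  ultimately show "(\<Sum>n<N. cmod (bc (Suc n))) \<le> 1"
    using sgn2[of N] bc_0 by simp
qed

lemma bc_real: "cnj (bc n) = bc n"
  by (simp add: bc_def)

lemma bc_cprod: "cprod bc bc = (\<lambda>m. if m \<le> 1 then 1 else 0)"
proof (rule ext)
  fix m
  have "fps_nth (fps_binomial (1/2::real) * fps_binomial (1/2)) m = fps_nth (fps_binomial 1) m"
    using fps_binomial_add_mult[of "1/2::real" "1/2"] by simp
  hence "(\<Sum>i\<le>m. ((1/2::real) gchoose i) * ((1/2) gchoose (m - i))) = (1::real) gchoose m"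
    by (simp add: fps_mult_nth atLeast0AtMost)
  moreover have "(1::real) gchoose m = (if m \<le> 1 then 1 else 0)"
  proof -
    have "(1::real) gchoose m = of_nat (1 choose m)" using binomial_gbinomial[of 1 m, where 'a=real] by simp
    thus ?thesis by (cases m) (auto simp: binomial_eq_0)
  qed
  ultimately show "cprod bc bc m = (if m \<le> 1 then 1 else 0)"
    unfolding cprod_def bc_def by (simp flip: of_real_mult of_real_sum)
qed



lemma cinner_series_left:
  assumes y: "y \<in> l2" and v: "\<And>n. v n \<in> l2" and s: "summable (\<lambda>n. l2norm (v n))"
  shows "(\<lambda>n. cinner (v n) y) sums cinner (ssum v) y"
proof -
  have sl: "ssum v \<in> l2" using series_bound(1)[OF v s] .
  have "(\<lambda>n. cinner y (v n)) sums cinner y (ssum v)" by (rule cinner_series_right[OF y v s])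
  hence "(\<lambda>n. cnj (cinner y (v n))) sums cnj (cinner y (ssum v))" by (simp only: sums_cnj)
  thus ?thesis using cinner_cnj[OF y v] cinner_cnj[OF y sl] by simp
qed

definition is_sqrt :: "vec set \<Rightarrow> (vec \<Rightarrow> vec) \<Rightarrow> (vec \<Rightarrow> vec) \<Rightarrow> bool" where
  "is_sqrt M A S \<longleftrightarrow> bounded_op M M S \<and> (\<forall>x. x \<notin> M \<longrightarrow> S x = 0)
     \<and> (\<forall>x\<in>M. \<forall>y\<in>M. cinner (S x) y = cinner x (S y))
     \<and> (\<forall>x\<in>M. Im (cinner (S x) x) = 0 \<and> 0 \<le> Re (cinner (S x) x))
     \<and> (\<forall>x\<in>M. S (S x) = A x)"

lemma op_sqrt_on_is: "op_sqrt_on M A = (THE S. is_sqrt M A S)"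
  unfolding op_sqrt_on_def is_sqrt_def ..

lemma pos_zero:
  assumes M: "subsp M" and P: "bounded_op M M P"
    and sa: "\<And>x y. x \<in> M \<Longrightarrow> y \<in> M \<Longrightarrow> cinner (P x) y = cinner x (P y)"
    and pos: "\<And>z. z \<in> M \<Longrightarrow> 0 \<le> Re (cinner (P z) z)"
    and y: "y \<in> M" and z: "Re (cinner (P y) y) = 0"
  shows "P y = 0"
proof (rule ccontr)
  assume ne: "P y \<noteq> 0"
  define u where "u = P y"
  have uM: "u \<in> M" unfolding u_def using bop_maps[OF P y] .
  have PuM: "P u \<in> M" using bop_maps[OF P uM] .
  have l: "y \<in> l2" "u \<in> l2" "P u \<in> l2" using y uM PuM M subsp_l2 by auto
  define a where "a = Re (cinner u u)"
  define c where "c = Re (cinner (P u) u)"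
  have a_pos: "0 < a" unfolding a_def using ne l(2) u_def
    by (metis cinner_self l2norm_zero_iff Re_complex_of_real zero_less_power2)
  have c0: "0 \<le> c" unfolding c_def using pos[OF uM] .
  define t where "t = a / (c + 1)"
  have t0: "0 < t" unfolding t_def using a_pos c0 by simp
  have tc: "t * c \<le> a"
  proof -
    have "t * c = a * (c / (c + 1))" unfolding t_def by simp
    also have "\<dots> \<le> a * 1" using a_pos c0 by (intro mult_left_mono) auto
    finally show ?thesis by simp
  qed
  define w where "w = y - smul (complex_of_real t) u"
  have wM: "w \<in> M" unfolding w_def using subsp_diff[OF M y subsp_smul[OF M uM]] .
  have Pw: "P w = u - smul (complex_of_real t) (P u)"
    unfolding w_def u_def using bop_diff[OF P M y subsp_smul[OF M uM]] bop_smul[OF P uM] u_def by simp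
  have lw: "smul (complex_of_real t) u \<in> l2" "smul (complex_of_real t) (P u) \<in> l2" using l by auto
  have expand: "cinner (P w) w = cinner u y - complex_of_real t * cinner u u
      - complex_of_real t * cinner (P u) y + complex_of_real t * complex_of_real t * cinner (P u) u"
  proof -
    have "cinner (P w) w = cinner (u - smul (complex_of_real t) (P u)) (y - smul (complex_of_real t) u)"
      unfolding Pw by (simp add: w_def)
    thus ?thesis using l lw
      by (simp add: cinner_diff_left cinner_diff_right cinner_smul_left cinner_smul_right algebra_simps)
  qed
  have Puy: "cinner (P u) y = cinner u u" using sa[OF uM y] unfolding u_def by simp
  have Ruy: "Re (cinner u y) = 0" using z unfolding u_def .
  have "Re (cinner (P w) w) = - t * a - t * a + t * t * c"
    unfolding expand Puy a_def c_def using Ruy by simp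
  also have "\<dots> = t * (t * c - 2 * a)" by (simp add: algebra_simps)
  also have "\<dots> \<le> t * (- a)" using tc t0 by (intro mult_left_mono) auto
  also have "\<dots> < 0" using t0 a_pos by simp
  finally show False using pos[OF wM] by simp
qed


locale sqs =
  fixes M :: "vec set" and B :: "vec \<Rightarrow> vec"
  assumes M: "subsp M" "sclosed M" and B: "bounded_op M M B"
    and Bc: "\<And>x. x \<in> M \<Longrightarrow> l2norm (B x) \<le> l2norm x"
    and Bsa: "\<And>x y. x \<in> M \<Longrightarrow> y \<in> M \<Longrightarrow> cinner (B x) y = cinner x (B y)"
begin

definition Cm :: "vec \<Rightarrow> vec" where "Cm = (\<lambda>x. - B x)"

definition S0 :: "vec \<Rightarrow> vec" where "S0 = (\<lambda>x. if x \<in> M then Fs Cm bc x else 0)"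

lemma inl2: "x \<in> M \<Longrightarrow> x \<in> l2"
  using M(1) subsp_l2 by blast

lemma Cm_bop: "bounded_op M M Cm"
  unfolding bounded_op_def Cm_def
proof (intro conjI)
  show "\<forall>x\<in>M. - B x \<in> M" using subsp_uminus[OF M(1) bop_maps[OF B]] by blast
  show "\<forall>x\<in>M. \<forall>y\<in>M. - B (x + y) = - B x + - B y" using bop_add[OF B] by simp
  show "\<forall>c. \<forall>x\<in>M. - B (smul c x) = smul c (- B x)" using bop_smul[OF B] by (auto simp: smul_def)
  show "\<exists>C. \<forall>x\<in>M. l2norm (- B x) \<le> C * l2norm x" using Bc by (auto simp: l2norm_uminus intro!: exI[of _ 1])
qed

lemma Cm_contr: "contr M Cm"
  by unfold_locales (use M Cm_bop Bc in \<open>auto simp: Cm_def l2norm_uminus\<close>)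

interpretation cm: contr M Cm by (rule Cm_contr)

lemma Cm_sa: "x \<in> M \<Longrightarrow> y \<in> M \<Longrightarrow> cinner (Cm x) y = cinner x (Cm y)"
  unfolding Cm_def using Bsa bop_maps[OF B] inl2 by (simp add: cinner_minus_left cinner_minus_right)

lemma pw_sa: "x \<in> M \<Longrightarrow> y \<in> M \<Longrightarrow> cinner ((Cm ^^ n) x) y = cinner x ((Cm ^^ n) y)"
proof (induction n arbitrary: x y)
  case 0 then show ?case by simp
next
  case (Suc n)
  have "cinner ((Cm ^^ Suc n) x) y = cinner (Cm ((Cm ^^ n) x)) y" by simp
  also have "\<dots> = cinner ((Cm ^^ n) x) (Cm y)" by (rule Cm_sa[OF cm.pw_in[OF Suc.prems(1)] Suc.prems(2)])
  also have "\<dots> = cinner x ((Cm ^^ n) (Cm y))" by (rule Suc.IH[OF Suc.prems(1) bop_maps[OF Cm_bop Suc.prems(2)]])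
  also have "\<dots> = cinner x ((Cm ^^ Suc n) y)" by (simp add: funpow_swap1)
  finally show ?case .
qed

lemma Fs_cinner_sums:
  assumes f: "summable (\<lambda>n. cmod (f n))" and x: "x \<in> M" and y: "y \<in> l2"
  shows "(\<lambda>n. f n * cinner ((Cm ^^ n) x) y) sums cinner (Fs Cm f x) y"
proof -
  have "(\<lambda>n. cinner (smul (f n) ((Cm ^^ n) x)) y) sums cinner (Fs Cm f x) y"
    unfolding Fs_def
    by (rule cinner_series_left[OF y]) (use inl2[OF cm.terms_in[OF x]] cm.terms_summ[OF f x] in auto)
  thus ?thesis using inl2[OF cm.pw_in[OF x]] y by (simp add: cinner_smul_left)
qed

lemma S0_sa:
  assumes x: "x \<in> M" and y: "y \<in> M"
  shows "cinner (S0 x) y = cinner x (S0 y)"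
proof -
  have s1: "(\<lambda>n. bc n * cinner ((Cm ^^ n) x) y) sums cinner (Fs Cm bc x) y"
    by (rule Fs_cinner_sums[OF bc_summable x inl2[OF y]])
  have "(\<lambda>n. bc n * cinner ((Cm ^^ n) y) x) sums cinner (Fs Cm bc y) x"
    by (rule Fs_cinner_sums[OF bc_summable y inl2[OF x]])
  hence "(\<lambda>n. cnj (bc n * cinner ((Cm ^^ n) y) x)) sums cnj (cinner (Fs Cm bc y) x)"
    by (simp only: sums_cnj)
  moreover have "cnj (bc n * cinner ((Cm ^^ n) y) x) = bc n * cinner ((Cm ^^ n) x) y" for n
  proof -
    have "cnj (cinner ((Cm ^^ n) y) x) = cinner x ((Cm ^^ n) y)"
      using cinner_cnj[OF inl2[OF x] inl2[OF cm.pw_in[OF y]]] by simp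
    also have "\<dots> = cinner ((Cm ^^ n) x) y" using pw_sa[OF x y] by simp
    finally show ?thesis by (simp add: bc_real)
  qed
  ultimately have "(\<lambda>n. bc n * cinner ((Cm ^^ n) x) y) sums cnj (cinner (Fs Cm bc y) x)" by simp
  hence "cinner (Fs Cm bc x) y = cnj (cinner (Fs Cm bc y) x)" using sums_unique2[OF s1] by simp
  also have "\<dots> = cinner x (Fs Cm bc y)"
    using cinner_cnj[OF inl2[OF x] inl2[OF cm.Fs_in[OF bc_summable y]]] by simp
  finally show ?thesis unfolding S0_def using x y by simp
qed

lemma S0_pos:
  assumes x: "x \<in> M"
  shows "0 \<le> Re (cinner (S0 x) x)"
proof -
  define a where "a = (\<lambda>n. bc n * cinner ((Cm ^^ n) x) x)"
  have s: "a sums cinner (Fs Cm bc x) x" unfolding a_def by (rule Fs_cinner_sums[OF bc_summable x inl2[OF x]])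
  hence sr: "(\<lambda>n. Re (a n)) sums Re (cinner (Fs Cm bc x) x)"
    by (rule bounded_linear.sums[OF bounded_linear_Re])
  have bnd: "cmod (a n) \<le> cmod (bc n) * (l2norm x)^2" for n
  proof -
    have "cmod (cinner ((Cm ^^ n) x) x) \<le> l2norm ((Cm ^^ n) x) * l2norm x"
      by (rule cauchy_schwarz[OF inl2[OF cm.pw_in[OF x]] inl2[OF x]])
    also have "\<dots> \<le> l2norm x * l2norm x" using cm.pw_le[OF x] inl2[OF x] by (intro mult_right_mono) auto
    finally show ?thesis unfolding a_def by (simp add: norm_mult power2_eq_square mult_left_mono)
  qed
  have a0: "Re (a 0) = (l2norm x)^2" unfolding a_def using inl2[OF x] by (simp add: bc_0 cinner_self)
  have sr2: "(\<lambda>n. Re (a (Suc n))) sums (Re (cinner (Fs Cm bc x) x) - Re (a 0))"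
    using sr sums_Suc_iff[of "\<lambda>n. Re (a n)"] by simp
  have st: "summable (\<lambda>n. cmod (bc (Suc n)))"
    using bc_summable summable_iff_shift[where f="\<lambda>n. cmod (bc n)" and k=1] by simp
  have "- (\<Sum>n. cmod (bc (Suc n)) * (l2norm x)^2) \<le> (\<Sum>n. Re (a (Suc n)))"
  proof -
    have "(\<Sum>n. - (cmod (bc (Suc n)) * (l2norm x)^2)) \<le> (\<Sum>n. Re (a (Suc n)))"
    proof (rule suminf_le)
      fix n show "- (cmod (bc (Suc n)) * (l2norm x)^2) \<le> Re (a (Suc n))"
        using bnd[of "Suc n"] abs_Re_le_cmod[of "a (Suc n)"] by linarith
    qed (use sums_summable[OF sr2] summable_minus[OF summable_mult2[OF st]] in auto)
    thus ?thesis using suminf_minus[OF summable_mult2[OF st]] by simp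
  qed
  moreover have "(\<Sum>n. cmod (bc (Suc n)) * (l2norm x)^2) \<le> (l2norm x)^2"
  proof -
    have "(\<Sum>n. cmod (bc (Suc n)) * (l2norm x)^2) = (\<Sum>n. cmod (bc (Suc n))) * (l2norm x)^2"
      by (rule suminf_mult2[OF st, symmetric])
    also have "\<dots> \<le> 1 * (l2norm x)^2" using bc_tail_le by (intro mult_right_mono) auto
    finally show ?thesis by simp
  qed
  ultimately have "0 \<le> (l2norm x)^2 + (\<Sum>n. Re (a (Suc n)))" by linarith
  also have "(\<Sum>n. Re (a (Suc n))) = Re (cinner (Fs Cm bc x) x) - (l2norm x)^2"
    using sums_unique[OF sr2] a0 by simp
  finally show ?thesis unfolding S0_def using x by simp
qed

lemma S0_real:
  assumes x: "x \<in> M" shows "Im (cinner (S0 x) x) = 0"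
proof -
  have "cinner (S0 x) x = cinner x (S0 x)" using S0_sa[OF x x] .
  also have "\<dots> = cnj (cinner (S0 x) x)"
    using cinner_cnj[OF inl2[OF x]] x inl2 cm.Fs_in[OF bc_summable x] unfolding S0_def by simp
  finally have "cinner (S0 x) x = cnj (cinner (S0 x) x)" .
  thus ?thesis by (metis cnj.simps(2) neg_equal_zero)
qed

lemma S0_in: "x \<in> M \<Longrightarrow> S0 x \<in> M"
  unfolding S0_def using cm.Fs_in[OF bc_summable] by simp

lemma S0_sq:
  assumes x: "x \<in> M" shows "S0 (S0 x) = x - B x"
proof -
  have "S0 (S0 x) = Fs Cm bc (Fs Cm bc x)" unfolding S0_def using x cm.Fs_in[OF bc_summable x] by simp
  also have "\<dots> = Fs Cm (cprod bc bc) x" by (rule cm.Fs_mult[OF bc_summable bc_summable x])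
  also have "\<dots> = x - B x"
  proof (rule ext)
    fix k
    have "(\<lambda>n. cprod bc bc n * (Cm ^^ n) x k) sums Fs Cm (cprod bc bc) x k"
      by (rule cm.Fs_coord_sums[OF acoef_cprod[OF bc_summable bc_summable] x])
    moreover have "(\<lambda>n. cprod bc bc n * (Cm ^^ n) x k) sums (\<Sum>n\<in>{0,1}. cprod bc bc n * (Cm ^^ n) x k)"
      by (rule sums_finite) (auto simp: bc_cprod)
    ultimately have "Fs Cm (cprod bc bc) x k = (\<Sum>n\<in>{0,1}. cprod bc bc n * (Cm ^^ n) x k)"
      using sums_unique2 by blast
    also have "\<dots> = x k - B x k" by (simp add: bc_cprod Cm_def)
    finally show "Fs Cm (cprod bc bc) x k = (x - B x) k" by simp
  qed
  finally show ?thesis .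
qed

lemma S0_bop: "bounded_op M M S0"
proof -
  have "bounded_op M M (Fs Cm bc)" by (rule cm.Fs_bop[OF bc_summable])
  thus ?thesis unfolding bounded_op_def S0_def
    using subsp_add[OF M(1)] subsp_smul[OF M(1)] by auto
qed

lemma S0_is_sqrt:
  assumes A: "\<And>x. x \<in> M \<Longrightarrow> A x = x - B x"
  shows "is_sqrt M A S0"
  unfolding is_sqrt_def using S0_bop S0_sa S0_pos S0_real S0_sq A S0_in
  by (auto simp: S0_def)

lemma sqrt_unique:
  assumes A: "\<And>x. x \<in> M \<Longrightarrow> A x = x - B x" and S: "is_sqrt M A S"
  shows "S = S0"
proof -
  have Sb: "bounded_op M M S" and S0out: "\<And>x. x \<notin> M \<Longrightarrow> S x = 0"
    and Ssa: "\<And>x y. x \<in> M \<Longrightarrow> y \<in> M \<Longrightarrow> cinner (S x) y = cinner x (S y)"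
    and Spos: "\<And>x. x \<in> M \<Longrightarrow> 0 \<le> Re (cinner (S x) x)"
    and Ssq: "\<And>x. x \<in> M \<Longrightarrow> S (S x) = A x"
    using S unfolding is_sqrt_def by auto
  have SB: "S (B x) = B (S x)" if x: "x \<in> M" for x
  proof -
    have Sx: "S x \<in> M" using bop_maps[OF Sb x] .
    have "S (S (S x)) = S x - B (S x)" using Ssq[OF Sx] A[OF Sx] by simp
    moreover have "S (S (S x)) = S x - S (B x)"
      using Ssq[OF x] A[OF x] bop_diff[OF Sb M(1) x bop_maps[OF B x]] by simp
    ultimately show ?thesis by simp
  qed
  have SC: "S (Cm x) = Cm (S x)" if x: "x \<in> M" for x
    unfolding Cm_def using SB[OF x] bop_uminus[OF Sb bop_maps[OF B x]] by simp
  have comm: "S (S0 x) = S0 (S x)" if x: "x \<in> M" for x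
  proof -
    have "S (Fs Cm bc x) = Fs Cm bc (S x)"
      by (rule Fs_comm[OF Sb M M(1) Cm_bop SC x cm.terms_summ[OF bc_summable x]])
    thus ?thesis unfolding S0_def using x bop_maps[OF Sb x] by simp
  qed
  have eq: "S x = S0 x" if x: "x \<in> M" for x
  proof -
    define y where "y = S0 x - S x"
    have S0x: "S0 x \<in> M" using S0_in[OF x] .
    have Sx: "S x \<in> M" using bop_maps[OF Sb x] .
    have yM: "y \<in> M" unfolding y_def using subsp_diff[OF M(1) S0x Sx] .
    have "S0 y + S y = 0"
    proof -
      have "S0 y = S0 (S0 x) - S0 (S x)" unfolding y_def by (rule bop_diff[OF S0_bop M(1) S0x Sx])
      moreover have "S y = S (S0 x) - S (S x)" unfolding y_def by (rule bop_diff[OF Sb M(1) S0x Sx])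
      ultimately show ?thesis using comm[OF x] S0_sq[OF x] Ssq[OF x] A[OF x] by simp
    qed
    hence "S y = - S0 y" by (simp add: eq_neg_iff_add_eq_0 add.commute)
    have yl: "y \<in> l2" using inl2[OF yM] .
    have "Re (cinner (S0 y) y) + Re (cinner (S y) y) = Re (cinner (S0 y + S y) y)"
      using inl2[OF S0_in[OF yM]] inl2[OF bop_maps[OF Sb yM]] yl by (simp add: cinner_add_left)
    also have "\<dots> = 0" using \<open>S0 y + S y = 0\<close> by simp
    finally have sum0: "Re (cinner (S0 y) y) + Re (cinner (S y) y) = 0" .
    have r1: "Re (cinner (S0 y) y) = 0" using sum0 S0_pos[OF yM] Spos[OF yM] by linarith
    have r2: "Re (cinner (S y) y) = 0" using sum0 S0_pos[OF yM] Spos[OF yM] by linarith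
    have z1: "S0 y = 0" by (rule pos_zero[OF M(1) S0_bop S0_sa S0_pos yM r1])
    have z2: "S y = 0" by (rule pos_zero[OF M(1) Sb Ssa Spos yM r2])
    have "cinner y y = cinner (S0 x) y - cinner (S x) y"
      unfolding y_def using inl2[OF S0x] inl2[OF Sx] yl by (simp add: cinner_diff_left)
    also have "\<dots> = cinner x (S0 y) - cinner x (S y)" using S0_sa[OF x yM] Ssa[OF x yM] by simp
    also have "\<dots> = 0" using z1 z2 by simp
    finally have "y = 0" using cinner_eq_zero_all[OF yl] by blast
    thus ?thesis unfolding y_def by simp
  qed
  show ?thesis
  proof (rule ext)
    fix x show "S x = S0 x"
      using eq S0out by (cases "x \<in> M") (auto simp: S0_def)
  qed
qed

theorem op_sqrt_eq:
  assumes A: "\<And>x. x \<in> M \<Longrightarrow> A x = x - B x"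
  shows "op_sqrt_on M A = S0"
  unfolding op_sqrt_on_is
proof (rule the_equality)
  show "is_sqrt M A S0" by (rule S0_is_sqrt[OF A])
  fix S assume h: "is_sqrt M A S"
  show "S = S0" by (rule sqrt_unique[where A=A]) (use A h in auto)
qed

theorem op_sqrt_props:
  assumes A: "\<And>x. x \<in> M \<Longrightarrow> A x = x - B x"
  shows "is_sqrt M A (op_sqrt_on M A)"
  using op_sqrt_eq[OF A] S0_is_sqrt[OF A] by simp

end



lemma inv_on_eq:
  assumes inj: "\<And>x x'. x \<in> M \<Longrightarrow> x' \<in> M \<Longrightarrow> F x = F x' \<Longrightarrow> x = x'"
    and x: "x \<in> M" and Fx: "F x = y" and y: "y \<in> M"
  shows "op_inv_on M F y = x"
proof -
  have "(THE x. x \<in> M \<and> F x = y) = x"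
    by (rule the_equality) (use inj x Fx in auto)
  thus ?thesis unfolding op_inv_on_def using y by simp
qed

lemma neumann:
  assumes M: "subsp M" "sclosed M" and B: "bounded_op M M B"
    and Bq: "\<And>x. x \<in> M \<Longrightarrow> l2norm (B x) \<le> q * l2norm x" and q: "0 \<le> q" "q < 1"
    and y: "y \<in> M"
  shows "ssum (\<lambda>n. (B ^^ n) y) \<in> M" "ssum (\<lambda>n. (B ^^ n) y) - B (ssum (\<lambda>n. (B ^^ n) y)) = y"
proof -
  define v where "v = (\<lambda>n. (B ^^ n) y)"
  have vM: "v n \<in> M" for n unfolding v_def by (rule funpow_maps[OF B y])
  have vl: "v n \<in> l2" for n using vM M(1) subsp_l2 by blast
  have yl: "y \<in> l2" using y M(1) subsp_l2 by blast
  have s: "summable (\<lambda>n. l2norm (v n))"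
  proof (rule summable_comparison_test'[where g="\<lambda>n. q ^ n * l2norm y"])
    show "summable (\<lambda>n. q ^ n * l2norm y)" using q by (intro summable_mult2 summable_geometric) auto
    fix n show "norm (l2norm (v n)) \<le> q ^ n * l2norm y"
      using funpow_contr[OF B Bq q(1) y, of n] vl[of n] unfolding v_def by simp
  qed
  show sM: "ssum (\<lambda>n. (B ^^ n) y) \<in> M" using M(2) vM s unfolding sclosed_def v_def by simp
  have Bs: "B (ssum v) = ssum (\<lambda>n. B (v n))" by (rule bop_ssum[OF B M M(1) vM s])
  have cs: "summable (\<lambda>n. v n k)" for k
    by (rule summable_norm_cancel[OF coord_summable[OF vl s]])
  have "ssum v - B (ssum v) = y"
  proof (rule ext)
    fix k
    have "(ssum v - B (ssum v)) k = ssum v k - ssum (\<lambda>n. B (v n)) k" using Bs by simp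
    also have "\<dots> = (\<Sum>n. v n k) - (\<Sum>n. v (Suc n) k)"
      unfolding ssum_def v_def by simp
    also have "\<dots> = v 0 k" using suminf_split_head[OF cs[of k]] by simp
    finally show "(ssum v - B (ssum v)) k = y k" unfolding v_def by simp
  qed
  thus "ssum (\<lambda>n. (B ^^ n) y) - B (ssum (\<lambda>n. (B ^^ n) y)) = y" unfolding v_def .
qed

lemma sqrt_kills:
  assumes S: "is_sqrt M A S" and k: "k \<in> M" and Ak: "A k = 0" and M: "subsp M"
  shows "S k = 0"
proof -
  have Sb: "bounded_op M M S" and Ssa: "\<And>x y. x \<in> M \<Longrightarrow> y \<in> M \<Longrightarrow> cinner (S x) y = cinner x (S y)"
    and Ssq: "\<And>x. x \<in> M \<Longrightarrow> S (S x) = A x"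
    using S unfolding is_sqrt_def by auto
  have Sk: "S k \<in> M" using bop_maps[OF Sb k] .
  have "cinner (S k) (S k) = cinner (S (S k)) k" using Ssa[OF Sk k] by simp
  also have "\<dots> = 0" using Ssq[OF k] Ak by simp
  finally show ?thesis using cinner_eq_zero_all Sk M subsp_l2 by blast
qed

lemma is_sqrt_restrict:
  assumes S: "is_sqrt M A S" and N: "subsp N" "N \<subseteq> M" and SN: "\<And>x. x \<in> N \<Longrightarrow> S x \<in> N"
    and A': "\<And>x. x \<in> N \<Longrightarrow> A' x = A x"
  shows "is_sqrt N A' (\<lambda>x. if x \<in> N then S x else 0)"
proof -
  have Sb: "bounded_op M M S" and Ssa: "\<And>x y. x \<in> M \<Longrightarrow> y \<in> M \<Longrightarrow> cinner (S x) y = cinner x (S y)"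
    and Spos: "\<And>x. x \<in> M \<Longrightarrow> Im (cinner (S x) x) = 0 \<and> 0 \<le> Re (cinner (S x) x)"
    and Ssq: "\<And>x. x \<in> M \<Longrightarrow> S (S x) = A x"
    using S unfolding is_sqrt_def by auto
  obtain K where K: "\<forall>x\<in>M. l2norm (S x) \<le> K * l2norm x" using Sb unfolding bounded_op_def by blast
  have bop: "bounded_op N N (\<lambda>x. if x \<in> N then S x else 0)"
    unfolding bounded_op_def
  proof (intro conjI)
    show "\<forall>x\<in>N. (if x \<in> N then S x else 0) \<in> N" using SN by simp
    show "\<forall>x\<in>N. \<forall>y\<in>N. (if x + y \<in> N then S (x + y) else 0) = (if x \<in> N then S x else 0) + (if y \<in> N then S y else 0)"
    proof (intro ballI)
      fix x y assume x: "x \<in> N" and y: "y \<in> N"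
      have "S (x + y) = S x + S y" using bop_add[OF Sb] x y N(2) by blast
      thus "(if x + y \<in> N then S (x + y) else 0) = (if x \<in> N then S x else 0) + (if y \<in> N then S y else 0)"
        using subsp_add[OF N(1) x y] x y by simp
    qed
    show "\<forall>c. \<forall>x\<in>N. (if smul c x \<in> N then S (smul c x) else 0) = smul c (if x \<in> N then S x else 0)"
    proof (intro allI ballI)
      fix c x assume x: "x \<in> N"
      have "S (smul c x) = smul c (S x)" using bop_smul[OF Sb] x N(2) by blast
      thus "(if smul c x \<in> N then S (smul c x) else 0) = smul c (if x \<in> N then S x else 0)"
        using subsp_smul[OF N(1) x] x by simp
    qed
    show "\<exists>C. \<forall>x\<in>N. l2norm (if x \<in> N then S x else 0) \<le> C * l2norm x"
      using K N(2) by auto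
  qed
  have NM: "\<And>x. x \<in> N \<Longrightarrow> x \<in> M" using N(2) by blast
  show ?thesis
    unfolding is_sqrt_def
  proof (intro conjI allI ballI impI)
    show "bounded_op N N (\<lambda>x. if x \<in> N then S x else 0)" using bop .
    fix x assume x: "x \<in> N"
    show "Im (cinner (if x \<in> N then S x else 0) x) = 0" using Spos[OF NM[OF x]] x by simp
    show "0 \<le> Re (cinner (if x \<in> N then S x else 0) x)" using Spos[OF NM[OF x]] x by simp
    show "(if (if x \<in> N then S x else 0) \<in> N then S (if x \<in> N then S x else 0) else 0) = A' x"
      using SN[OF x] Ssq[OF NM[OF x]] A'[OF x] x by simp
    fix y assume y: "y \<in> N"
    show "cinner (if x \<in> N then S x else 0) y = cinner x (if y \<in> N then S y else 0)"
      using Ssa[OF NM[OF x] NM[OF y]] x y by simp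
  qed simp
qed

lemma sqrt_inv:
  assumes M: "subsp M" "sclosed M" and S: "is_sqrt M A S"
    and A: "\<And>x. x \<in> M \<Longrightarrow> A x = x - B x" and B: "bounded_op M M B"
    and Bq: "\<And>x. x \<in> M \<Longrightarrow> l2norm (B x) \<le> q * l2norm x" and q: "0 \<le> q" "q < 1"
  shows "\<And>x x'. x \<in> M \<Longrightarrow> x' \<in> M \<Longrightarrow> S x = S x' \<Longrightarrow> x = x'"
    and "\<And>y. y \<in> M \<Longrightarrow> op_inv_on M S y \<in> M \<and> S (op_inv_on M S y) = y"
    and "\<And>x. x \<in> M \<Longrightarrow> op_inv_on M S (S x) = x"
proof -
  have Sb: "bounded_op M M S" and Ssq: "\<And>x. x \<in> M \<Longrightarrow> S (S x) = A x"
    using S unfolding is_sqrt_def by auto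
  show inj: "\<And>x x'. x \<in> M \<Longrightarrow> x' \<in> M \<Longrightarrow> S x = S x' \<Longrightarrow> x = x'"
  proof -
    fix x x' assume x: "x \<in> M" and x': "x' \<in> M" and e: "S x = S x'"
    define z where "z = x - x'"
    have zM: "z \<in> M" unfolding z_def using subsp_diff[OF M(1) x x'] .
    have "S z = 0" unfolding z_def using bop_diff[OF Sb M(1) x x'] e by simp
    hence "A z = 0" using Ssq[OF zM] bop_zero[OF Sb M(1)] by simp
    hence zB: "z = B z" using A[OF zM] by simp
    have zl: "z \<in> l2" using zM M(1) subsp_l2 by blast
    have "l2norm z \<le> q * l2norm z" using Bq[OF zM] zB by simp
    hence "l2norm z = 0" using q zl l2norm_nonneg[OF zl]
      by (metis mult_le_cancel_right1 not_less order_antisym)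
    hence "z = 0" using l2norm_zero_iff[OF zl] by simp
    thus "x = x'" unfolding z_def by simp
  qed
  show "\<And>x. x \<in> M \<Longrightarrow> op_inv_on M S (S x) = x"
    by (rule inv_on_eq[OF inj]) (auto simp: bop_maps[OF Sb])
  fix y assume y: "y \<in> M"
  define N where "N = ssum (\<lambda>n. (B ^^ n) y)"
  have NM: "N \<in> M" and NB: "N - B N = y" unfolding N_def using neumann[OF M B Bq q y] by auto
  define x where "x = S N"
  have xM: "x \<in> M" unfolding x_def using bop_maps[OF Sb NM] .
  have Sx: "S x = y" unfolding x_def using Ssq[OF NM] A[OF NM] NB by simp
  have "op_inv_on M S y = x" by (rule inv_on_eq[where M=M and F=S, OF inj xM Sx y])
  thus "op_inv_on M S y \<in> M \<and> S (op_inv_on M S y) = y" using xM Sx by simp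
qed



locale setting =
  fixes T :: "vec \<Rightarrow> vec"
  assumes Tb: "bounded_op l2 l2 T"
    and Tc0: "\<forall>x\<in>l2. l2norm (T x) \<le> l2norm x"
    and Tn: "op_norm_on (orth (Kset T)) T < 1"
begin

abbreviation "Ts \<equiv> adj T"
abbreviation "K \<equiv> Kset T"
abbreviation "Ks \<equiv> Kstar T"
abbreviation "Kp \<equiv> orth (Kset T)"
abbreviation "Ksp \<equiv> orth (Kstar T)"

lemma Tc: "x \<in> l2 \<Longrightarrow> l2norm (T x) \<le> l2norm x"
  using Tc0 by blast

lemma Tsb: "bounded_op l2 l2 Ts" and Tsc: "y \<in> l2 \<Longrightarrow> l2norm (Ts y) \<le> l2norm y"
  using adj_bop[OF Tb Tc] by auto

lemma Tl2: "x \<in> l2 \<Longrightarrow> T x \<in> l2"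
  using bop_maps[OF Tb] .

lemma Tsl2: "x \<in> l2 \<Longrightarrow> Ts x \<in> l2"
  using bop_maps[OF Tsb] .

lemma adjT: "x \<in> l2 \<Longrightarrow> y \<in> l2 \<Longrightarrow> cinner (T x) y = cinner x (Ts y)"
  using adj_props(2)[OF Tb] by blast

lemma adjT': "x \<in> l2 \<Longrightarrow> y \<in> l2 \<Longrightarrow> cinner (Ts y) x = cinner y (T x)"
proof -
  assume x: "x \<in> l2" and y: "y \<in> l2"
  have "cinner (Ts y) x = cnj (cinner x (Ts y))" using cinner_cnj[OF x Tsl2[OF y]] .
  also have "\<dots> = cnj (cinner (T x) y)" using adjT[OF x y] by simp
  also have "\<dots> = cinner y (T x)" using cinner_cnj[OF Tl2[OF x] y] by simp
  finally show ?thesis .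
qed

lemma K_l2: "K \<subseteq> l2" and Ks_l2: "Ks \<subseteq> l2"
  unfolding Kset_def Kstar_def by auto

lemma K_iff: "k \<in> K \<longleftrightarrow> k \<in> l2 \<and> Ts (T k) = k"
  unfolding Kset_def by auto

lemma Ks_iff: "k \<in> Ks \<longleftrightarrow> k \<in> l2 \<and> T (Ts k) = k"
  unfolding Kstar_def by auto

lemma TsT_bop: "bounded_op l2 l2 (\<lambda>x. Ts (T x))"
  by (rule bop_comp[OF Tb Tsb subsp_l2_UNIV subsp_l2_UNIV subsp_l2_UNIV])

lemma TTs_bop: "bounded_op l2 l2 (\<lambda>x. T (Ts x))"
  by (rule bop_comp[OF Tsb Tb subsp_l2_UNIV subsp_l2_UNIV subsp_l2_UNIV])

lemma K_subsp: "subsp K"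
  unfolding subsp_def
  by (auto simp: K_iff bop_add[OF TsT_bop] bop_smul[OF TsT_bop] bop_zero[OF TsT_bop subsp_l2_UNIV])

lemma Ks_subsp: "subsp Ks"
  unfolding subsp_def
  by (auto simp: Ks_iff bop_add[OF TTs_bop] bop_smul[OF TTs_bop] bop_zero[OF TTs_bop subsp_l2_UNIV])

lemma Kp_subsp: "subsp Kp" and Kp_closed: "sclosed Kp" and Ksp_subsp: "subsp Ksp" and Ksp_closed: "sclosed Ksp"
  using subsp_orth[OF K_l2] sclosed_orth[OF K_l2] subsp_orth[OF Ks_l2] sclosed_orth[OF Ks_l2] by auto

lemma Kp_l2: "x \<in> Kp \<Longrightarrow> x \<in> l2" and Ksp_l2: "x \<in> Ksp \<Longrightarrow> x \<in> l2"
  using orth_l2 by auto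

lemma orthD: "y \<in> orth S \<Longrightarrow> x \<in> S \<Longrightarrow> cinner x y = 0"
  unfolding orth_def by auto

lemma orthI: "y \<in> l2 \<Longrightarrow> (\<And>x. x \<in> S \<Longrightarrow> cinner x y = 0) \<Longrightarrow> y \<in> orth S"
  unfolding orth_def by auto

lemma TK: "k \<in> K \<Longrightarrow> T k \<in> Ks"
  unfolding K_iff Ks_iff using Tl2 by simp

lemma TsKs: "k \<in> Ks \<Longrightarrow> Ts k \<in> K"
  unfolding K_iff Ks_iff using Tsl2 by simp

lemma TKp: "x \<in> Kp \<Longrightarrow> T x \<in> Ksp"
proof (rule orthI)
  assume x: "x \<in> Kp"
  show "T x \<in> l2" using Tl2[OF Kp_l2[OF x]] .
  fix k assume k: "k \<in> Ks"
  have kl: "k \<in> l2" using k Ks_l2 by blast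
  have "cinner k (T x) = cinner (Ts k) x" using adjT'[OF Kp_l2[OF x] kl] by simp
  also have "\<dots> = 0" using orthD[OF x TsKs[OF k]] .
  finally show "cinner k (T x) = 0" .
qed

lemma TsKsp: "y \<in> Ksp \<Longrightarrow> Ts y \<in> Kp"
proof (rule orthI)
  assume y: "y \<in> Ksp"
  show "Ts y \<in> l2" using Tsl2[OF Ksp_l2[OF y]] .
  fix k assume k: "k \<in> K"
  have kl: "k \<in> l2" using k K_l2 by blast
  have "cinner k (Ts y) = cinner (T k) y" using adjT[OF kl Ksp_l2[OF y]] by simp
  also have "\<dots> = 0" using orthD[OF y TK[OF k]] .
  finally show "cinner k (Ts y) = 0" .
qed

lemma tstar: "y \<in> Ksp \<Longrightarrow> t_star T y = Ts y"
  unfolding t_star_def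
  by (rule adj_on_eq[OF Kp_subsp _ TsKsp]) (auto simp: adjT Kp_l2 Ksp_l2)

lemma cbound: obtains c where "0 \<le> c" "c < 1" "\<And>x. x \<in> Kp \<Longrightarrow> l2norm (T x) \<le> c * l2norm x"
proof -
  define X where "X = {l2norm (T x) | x. x \<in> Kp \<and> l2norm x \<le> 1}"
  define c where "c = op_norm_on Kp T"
  have cX: "c = Sup X" unfolding c_def X_def op_norm_on_def ..
  have bdd: "bdd_above X" unfolding X_def
    by (rule bdd_aboveI[where M=1]) (use Tc Kp_l2 order_trans in blast)
  have ne: "0 \<in> X" unfolding X_def using subsp_zero[OF Kp_subsp] bop_zero[OF Tb subsp_l2_UNIV]
    by (auto intro!: exI[of _ 0])
  have c0: "0 \<le> c" unfolding cX using cSup_upper[OF ne bdd] .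
  have bnd: "l2norm (T x) \<le> c * l2norm x" if x: "x \<in> Kp" for x
  proof (cases "x = 0")
    case True then show ?thesis using bop_zero[OF Tb subsp_l2_UNIV] by simp
  next
    case False
    have xl: "x \<in> l2" using Kp_l2[OF x] .
    have np: "0 < l2norm x" using False l2norm_zero_iff[OF xl] l2norm_nonneg[OF xl] by linarith
    define x' where "x' = smul (complex_of_real (1 / l2norm x)) x"
    have x'K: "x' \<in> Kp" unfolding x'_def using subsp_smul[OF Kp_subsp x] .
    have nx': "l2norm x' = 1" unfolding x'_def using l2norm_smul[OF xl] np by (simp add: norm_divide)
    have Tx': "l2norm (T x') = l2norm (T x) / l2norm x"
      unfolding x'_def using bop_smul[OF Tb xl] l2norm_smul[OF Tl2[OF xl]] np by (simp add: norm_divide)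
    have "l2norm (T x') \<in> X" unfolding X_def using x'K nx' by auto
    hence "l2norm (T x) / l2norm x \<le> c" unfolding cX Tx'[symmetric] using cSup_upper[OF _ bdd] by blast
    thus ?thesis using np by (simp add: field_simps)
  qed
  show ?thesis using that[OF c0 _ bnd] Tn unfolding c_def by blast
qed

lemma sqs_D: "sqs l2 (\<lambda>x. Ts (T x))"
proof
  show "subsp l2" "sclosed l2" by (rule subsp_l2_UNIV, rule sclosed_l2)
  show "bounded_op l2 l2 (\<lambda>x. Ts (T x))" by (rule TsT_bop)
  fix x assume x: "x \<in> l2"
  show "l2norm (Ts (T x)) \<le> l2norm x" using Tsc[OF Tl2[OF x]] Tc[OF x] by linarith
  fix y assume y: "y \<in> l2"
  show "cinner (Ts (T x)) y = cinner x (Ts (T y))"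
    using adjT'[OF y Tl2[OF x]] adjT[OF x Tl2[OF y]] by simp
qed

lemma sqs_Ds: "sqs l2 (\<lambda>x. T (Ts x))"
proof
  show "subsp l2" "sclosed l2" by (rule subsp_l2_UNIV, rule sclosed_l2)
  show "bounded_op l2 l2 (\<lambda>x. T (Ts x))" by (rule TTs_bop)
  fix x assume x: "x \<in> l2"
  show "l2norm (T (Ts x)) \<le> l2norm x" using Tc[OF Tsl2[OF x]] Tsc[OF x] by linarith
  fix y assume y: "y \<in> l2"
  show "cinner (T (Ts x)) y = cinner x (T (Ts y))"
    using adjT[OF Tsl2[OF x] y] adjT'[OF Tsl2[OF y] x] by simp
qed

lemma bop_restrict:
  assumes L: "bounded_op M M' L" and N: "\<And>x. x \<in> N \<Longrightarrow> x \<in> M" and maps: "\<And>x. x \<in> N \<Longrightarrow> L x \<in> N'"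
  shows "bounded_op N N' L"
proof -
  obtain C where C: "\<forall>x\<in>M. l2norm (L x) \<le> C * l2norm x" using L unfolding bounded_op_def by blast
  show ?thesis unfolding bounded_op_def
  proof (intro conjI ballI allI exI[of _ C])
    fix x assume x: "x \<in> N"
    show "L x \<in> N'" using maps[OF x] .
    show "l2norm (L x) \<le> C * l2norm x" using C N[OF x] by blast
    show "\<And>c. L (smul c x) = smul c (L x)" using bop_smul[OF L N[OF x]] .
    fix y assume y: "y \<in> N"
    show "L (x + y) = L x + L y" using bop_add[OF L N[OF x] N[OF y]] .
  qed
qed

lemma B1_bop: "bounded_op Kp Kp (\<lambda>x. Ts (T x))"
  by (rule bop_restrict[OF TsT_bop]) (auto simp: Kp_l2 TsKsp TKp)

lemma B2_bop: "bounded_op Ksp Ksp (\<lambda>x. T (Ts x))"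
  by (rule bop_restrict[OF TTs_bop]) (auto simp: Ksp_l2 TsKsp TKp)

lemma Ts_bop_sp: "bounded_op Ksp Kp Ts"
  by (rule bop_restrict[OF Tsb]) (auto simp: Ksp_l2 TsKsp)

lemma sqs_S1: "sqs Kp (\<lambda>x. Ts (T x))"
proof
  show "subsp Kp" "sclosed Kp" by (rule Kp_subsp, rule Kp_closed)
  show "bounded_op Kp Kp (\<lambda>x. Ts (T x))" by (rule B1_bop)
  fix x assume x: "x \<in> Kp"
  show "l2norm (Ts (T x)) \<le> l2norm x" using sqs.Bc[OF sqs_D Kp_l2[OF x]] .
  fix y assume y: "y \<in> Kp"
  show "cinner (Ts (T x)) y = cinner x (Ts (T y))" using sqs.Bsa[OF sqs_D Kp_l2[OF x] Kp_l2[OF y]] .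
qed

lemma sqs_S2: "sqs Ksp (\<lambda>x. T (Ts x))"
proof
  show "subsp Ksp" "sclosed Ksp" by (rule Ksp_subsp, rule Ksp_closed)
  show "bounded_op Ksp Ksp (\<lambda>x. T (Ts x))" by (rule B2_bop)
  fix x assume x: "x \<in> Ksp"
  show "l2norm (T (Ts x)) \<le> l2norm x" using sqs.Bc[OF sqs_Ds Ksp_l2[OF x]] .
  fix y assume y: "y \<in> Ksp"
  show "cinner (T (Ts x)) y = cinner x (T (Ts y))" using sqs.Bsa[OF sqs_Ds Ksp_l2[OF x] Ksp_l2[OF y]] .
qed

abbreviation "D \<equiv> defect T"
abbreviation "Ds \<equiv> defect_star T"
abbreviation "A1 \<equiv> (\<lambda>x. x - t_star T (T x))"
abbreviation "A2 \<equiv> (\<lambda>y. y - T (t_star T y))"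
abbreviation "S1 \<equiv> op_sqrt_on Kp A1"
abbreviation "S2 \<equiv> op_sqrt_on Ksp A2"

lemma A1_eq: "x \<in> Kp \<Longrightarrow> A1 x = x - Ts (T x)"
  using tstar[OF TKp] by simp

lemma A2_eq: "y \<in> Ksp \<Longrightarrow> A2 y = y - T (Ts y)"
  using tstar by simp

lemma D_sqrt: "is_sqrt l2 (\<lambda>x. x - Ts (T x)) D"
  unfolding defect_def by (rule sqs.op_sqrt_props[OF sqs_D]) simp

lemma Ds_sqrt: "is_sqrt l2 (\<lambda>x. x - T (Ts x)) Ds"
  unfolding defect_star_def by (rule sqs.op_sqrt_props[OF sqs_Ds]) simp

lemma S1_sqrt: "is_sqrt Kp A1 S1"
  by (rule sqs.op_sqrt_props[OF sqs_S1]) (rule A1_eq)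

lemma S2_sqrt: "is_sqrt Ksp A2 S2"
  by (rule sqs.op_sqrt_props[OF sqs_S2]) (rule A2_eq)

lemma S1_series: "x \<in> Kp \<Longrightarrow> S1 x = Fs (sqs.Cm (\<lambda>x. Ts (T x))) bc x"
  using sqs.op_sqrt_eq[OF sqs_S1, of A1] A1_eq sqs.S0_def[OF sqs_S1] by simp

lemma S2_series: "y \<in> Ksp \<Longrightarrow> S2 y = Fs (sqs.Cm (\<lambda>x. T (Ts x))) bc y"
  using sqs.op_sqrt_eq[OF sqs_S2, of A2] A2_eq sqs.S0_def[OF sqs_S2] by simp

lemma sqrt_parts:
  assumes "is_sqrt M A S"
  shows "bounded_op M M S" "\<And>x y. x \<in> M \<Longrightarrow> y \<in> M \<Longrightarrow> cinner (S x) y = cinner x (S y)"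
    "\<And>x. x \<in> M \<Longrightarrow> S (S x) = A x"
  using assms unfolding is_sqrt_def by auto

lemma D_K: "k \<in> K \<Longrightarrow> D k = 0"
  by (rule sqrt_kills[OF D_sqrt _ _ subsp_l2_UNIV]) (auto simp: K_iff)

lemma Ds_Ks: "k \<in> Ks \<Longrightarrow> Ds k = 0"
  by (rule sqrt_kills[OF Ds_sqrt _ _ subsp_l2_UNIV]) (auto simp: Ks_iff)

lemma D_Kp_in: "x \<in> Kp \<Longrightarrow> D x \<in> Kp"
proof (rule orthI)
  assume x: "x \<in> Kp"
  show "D x \<in> l2" using bop_maps[OF sqrt_parts(1)[OF D_sqrt] Kp_l2[OF x]] .
  fix k assume k: "k \<in> K"
  have "cinner k (D x) = cinner (D k) x" using sqrt_parts(2)[OF D_sqrt, of k x] k K_l2 Kp_l2[OF x] by auto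
  thus "cinner k (D x) = 0" using D_K[OF k] by simp
qed

lemma Ds_Ksp_in: "x \<in> Ksp \<Longrightarrow> Ds x \<in> Ksp"
proof (rule orthI)
  assume x: "x \<in> Ksp"
  show "Ds x \<in> l2" using bop_maps[OF sqrt_parts(1)[OF Ds_sqrt] Ksp_l2[OF x]] .
  fix k assume k: "k \<in> Ks"
  have "cinner k (Ds x) = cinner (Ds k) x" using sqrt_parts(2)[OF Ds_sqrt, of k x] k Ks_l2 Ksp_l2[OF x] by auto
  thus "cinner k (Ds x) = 0" using Ds_Ks[OF k] by simp
qed

lemma D_Kp: "x \<in> Kp \<Longrightarrow> D x = S1 x"
proof -
  assume x: "x \<in> Kp"
  have r: "is_sqrt Kp A1 (\<lambda>x. if x \<in> Kp then D x else 0)"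
    by (rule is_sqrt_restrict[OF D_sqrt Kp_subsp]) (auto simp: Kp_l2 D_Kp_in A1_eq)
  have e1: "(\<lambda>x. if x \<in> Kp then D x else 0) = sqs.S0 Kp (\<lambda>x. Ts (T x))"
    by (rule sqs.sqrt_unique[OF sqs_S1 _ r]) (rule A1_eq)
  have e2: "S1 = sqs.S0 Kp (\<lambda>x. Ts (T x))"
    by (rule sqs.op_sqrt_eq[OF sqs_S1]) (rule A1_eq)
  show ?thesis using fun_cong[OF e1, of x] e2 x by simp
qed

lemma Ds_Ksp: "x \<in> Ksp \<Longrightarrow> Ds x = S2 x"
proof -
  assume x: "x \<in> Ksp"
  have r: "is_sqrt Ksp A2 (\<lambda>x. if x \<in> Ksp then Ds x else 0)"
    by (rule is_sqrt_restrict[OF Ds_sqrt Ksp_subsp]) (auto simp: Ksp_l2 Ds_Ksp_in A2_eq)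
  have e1: "(\<lambda>x. if x \<in> Ksp then Ds x else 0) = sqs.S0 Ksp (\<lambda>x. T (Ts x))"
    by (rule sqs.sqrt_unique[OF sqs_S2 _ r]) (rule A2_eq)
  have e2: "S2 = sqs.S0 Ksp (\<lambda>x. T (Ts x))"
    by (rule sqs.op_sqrt_eq[OF sqs_S2]) (rule A2_eq)
  show ?thesis using fun_cong[OF e1, of x] e2 x by simp
qed

lemma inter: "y \<in> Ksp \<Longrightarrow> S1 (Ts y) = Ts (S2 y)"
proof -
  assume y: "y \<in> Ksp"
  have "Ts (Fs (sqs.Cm (\<lambda>x. T (Ts x))) bc y) = Fs (sqs.Cm (\<lambda>x. Ts (T x))) bc (Ts y)"
  proof (rule Fs_comm[OF Ts_bop_sp Ksp_subsp Ksp_closed Kp_subsp sqs.Cm_bop[OF sqs_S2] _ y])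
    fix z assume z: "z \<in> Ksp"
    show "Ts (sqs.Cm (\<lambda>x. T (Ts x)) z) = sqs.Cm (\<lambda>x. Ts (T x)) (Ts z)"
      unfolding sqs.Cm_def[OF sqs_S2] sqs.Cm_def[OF sqs_S1]
      using bop_uminus[OF Tsb Tl2[OF Tsl2[OF Ksp_l2[OF z]]]] by simp
  next
    show "summable (\<lambda>n. l2norm (smul (bc n) ((sqs.Cm (\<lambda>x. T (Ts x)) ^^ n) y)))"
      by (rule contr.terms_summ[OF sqs.Cm_contr[OF sqs_S2] bc_summable y])
  qed
  thus ?thesis using S1_series[OF TsKsp[OF y]] S2_series[OF y] by simp
qed

lemma D_range: "x \<in> l2 \<Longrightarrow> D x \<in> Kp"
proof (rule orthI)
  assume x: "x \<in> l2"
  show "D x \<in> l2" using bop_maps[OF sqrt_parts(1)[OF D_sqrt] x] .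
  fix k assume k: "k \<in> K"
  have "cinner k (D x) = cinner (D k) x" using sqrt_parts(2)[OF D_sqrt, of k x] k K_l2 x by auto
  thus "cinner k (D x) = 0" using D_K[OF k] by simp
qed

lemma B1_le: obtains c where "0 \<le> c" "c < 1" "\<And>x. x \<in> Kp \<Longrightarrow> l2norm (Ts (T x)) \<le> c * l2norm x"
    "\<And>y. y \<in> Ksp \<Longrightarrow> l2norm (T (Ts y)) \<le> c * l2norm y"
proof -
  obtain c where c: "0 \<le> c" "c < 1" "\<And>x. x \<in> Kp \<Longrightarrow> l2norm (T x) \<le> c * l2norm x" by (rule cbound) blast
  have 1: "l2norm (Ts (T x)) \<le> c * l2norm x" if x: "x \<in> Kp" for x
    using Tsc[OF Tl2[OF Kp_l2[OF x]]] c(3)[OF x] by linarith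
  have 2: "l2norm (T (Ts y)) \<le> c * l2norm y" if y: "y \<in> Ksp" for y
  proof -
    have "l2norm (T (Ts y)) \<le> c * l2norm (Ts y)" using c(3)[OF TsKsp[OF y]] .
    also have "\<dots> \<le> c * l2norm y" using Tsc[OF Ksp_l2[OF y]] c(1) by (rule mult_left_mono)
    finally show ?thesis .
  qed
  show ?thesis using that[OF c(1,2) 1 2] .
qed

lemma R1_props: "y \<in> Kp \<Longrightarrow> R1 T y \<in> Kp \<and> S1 (R1 T y) = y"
  and R1_inv: "x \<in> Kp \<Longrightarrow> R1 T (S1 x) = x"
proof -
  obtain c where c: "0 \<le> c" "c < 1" "\<And>x. x \<in> Kp \<Longrightarrow> l2norm (Ts (T x)) \<le> c * l2norm x" by (rule B1_le) blast
  note si = sqrt_inv[OF Kp_subsp Kp_closed S1_sqrt A1_eq B1_bop c(3) c(1,2)]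
  show "y \<in> Kp \<Longrightarrow> R1 T y \<in> Kp \<and> S1 (R1 T y) = y" unfolding R1_def by (rule si(2))
  show "x \<in> Kp \<Longrightarrow> R1 T (S1 x) = x" unfolding R1_def by (rule si(3))
qed

lemma R2_props: "y \<in> Ksp \<Longrightarrow> R2 T y \<in> Ksp \<and> S2 (R2 T y) = y"
  and R2_inv: "x \<in> Ksp \<Longrightarrow> R2 T (S2 x) = x"
proof -
  obtain c where c: "0 \<le> c" "c < 1" "\<And>y. y \<in> Ksp \<Longrightarrow> l2norm (T (Ts y)) \<le> c * l2norm y" by (rule B1_le) blast
  note si = sqrt_inv[OF Ksp_subsp Ksp_closed S2_sqrt A2_eq B2_bop c(3) c(1,2)]
  show "y \<in> Ksp \<Longrightarrow> R2 T y \<in> Ksp \<and> S2 (R2 T y) = y" unfolding R2_def by (rule si(2))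
  show "x \<in> Ksp \<Longrightarrow> R2 T (S2 x) = x" unfolding R2_def by (rule si(3))
qed

lemma Rinter: "y \<in> Ksp \<Longrightarrow> R1 T (Ts y) = Ts (R2 T y)"
proof -
  assume y: "y \<in> Ksp"
  define u where "u = R2 T y"
  have u: "u \<in> Ksp" "S2 u = y" using R2_props[OF y] unfolding u_def by auto
  have "S1 (Ts u) = Ts y" using inter[OF u(1)] u(2) by simp
  hence "R1 T (Ts y) = R1 T (S1 (Ts u))" by simp
  also have "\<dots> = Ts u" by (rule R1_inv[OF TsKsp[OF u(1)]])
  finally show ?thesis unfolding u_def .
qed

lemma decomp_unique:
  assumes "x0 \<in> K" "x0' \<in> K" "p \<in> Kp" "p' \<in> Kp" "x0 + p = x0' + p'"
  shows "p = p'" "x0 = x0'"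
proof -
  define z where "z = p - p'"
  have zKp: "z \<in> Kp" unfolding z_def using subsp_diff[OF Kp_subsp assms(3,4)] .
  have "z = x0' - x0" unfolding z_def using assms(5) by (simp add: algebra_simps)
  hence zK: "z \<in> K" using subsp_diff[OF K_subsp assms(2,1)] by simp
  have "cinner z z = 0" using orthD[OF zKp zK] .
  hence "z = 0" using cinner_eq_zero_all Kp_l2[OF zKp] by blast
  thus "p = p'" unfolding z_def by simp
  thus "x0 = x0'" using assms(5) by simp
qed

theorem main:
  assumes l: "cmod l < 1" and a: "a \<in> N_lambda T l"
  shows "Gamma'_minus T a = - char_fun T l (Gamma'_plus T a)"
proof -
  obtain x where x: "x \<in> l2" and ax: "a = (x, smul l x)" and ao: "a \<in> s_orth (A_T T)"
    using a unfolding N_lambda_def by auto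
  have oc: "cinner x k = cinner (smul l x) (T k)" if k: "k \<in> K" for k
  proof -
    have "(k, T k) \<in> A_T T" unfolding A_T_def using k by auto
    hence "krein_form a (k, T k) = 0" using ao unfolding s_orth_def by auto
    hence "\<i> * cinner x k - \<i> * cinner (smul l x) (T k) = 0" unfolding krein_form_def ax by simp
    hence "\<i> * (cinner x k - cinner (smul l x) (T k)) = 0" by (simp add: right_diff_distrib)
    thus ?thesis by simp
  qed
  define p where "p = R1 T (D x)"
  have p: "p \<in> Kp" "S1 p = D x" using R1_props[OF D_range[OF x]] unfolding p_def by auto
  have pl: "p \<in> l2" using Kp_l2[OF p(1)] .
  define x0 where "x0 = x - p"
  have x0l: "x0 \<in> l2" unfolding x0_def using x pl by simp
  have Dx0: "D x0 = 0"
    unfolding x0_def using bop_diff[OF sqrt_parts(1)[OF D_sqrt] subsp_l2_UNIV x pl] D_Kp[OF p(1)] p(2) by simp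
  have x0K: "x0 \<in> K"
  proof -
    have "D (D x0) = x0 - Ts (T x0)" using sqrt_parts(3)[OF D_sqrt x0l] by simp
    hence "x0 - Ts (T x0) = 0" using Dx0 bop_zero[OF sqrt_parts(1)[OF D_sqrt] subsp_l2_UNIV] by simp
    thus ?thesis using x0l unfolding Kset_def by simp
  qed
  have x0l': "x0 \<in> l2" using x0l .
  define m where "m = smul l x - T x0"
  have ml: "m \<in> l2" unfolding m_def using x Tl2[OF x0l] by simp
  have mKsp: "m \<in> Ksp"
  proof (rule orthI[OF ml])
    fix k assume k: "k \<in> Ks"
    have kl: "k \<in> l2" using k Ks_l2 by blast
    define k' where "k' = Ts k"
    have k'K: "k' \<in> K" unfolding k'_def using TsKs[OF k] .
    have k'l: "k' \<in> l2" using k'K K_l2 by blast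
    have Tk': "T k' = k" unfolding k'_def using k Ks_iff by simp
    have Tsk': "Ts (T k') = k'" using k'K K_iff by simp
    have "cinner m k = cinner (smul l x) k - cinner (T x0) k"
      unfolding m_def using x kl Tl2[OF x0l] by (simp add: cinner_diff_left)
    also have "cinner (smul l x) k = cinner x k'" using oc[OF k'K] Tk' by simp
    also have "cinner (T x0) k = cinner x0 k'" using adjT[OF x0l kl] Tk' Tsk' unfolding k'_def by simp
    also have "cinner x k' - cinner x0 k' = cinner p k'"
      unfolding x0_def using x pl k'l by (simp add: cinner_diff_left)
    also have "\<dots> = cnj (cinner k' p)" using cinner_cnj[OF k'l pl] .
    also have "\<dots> = 0" using orthD[OF p(1) k'K] by simp
    finally have "cinner m k = 0" .
    thus "cinner k m = 0" using cinner_cnj[OF kl ml] by simp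
  qed
  have xdec: "x = x0 + p" unfolding x0_def by simp
  have ydec: "smul l x = T x0 + m" unfolding m_def by simp
  have GP: "Gamma_plus T a = p"
    unfolding Gamma_plus_def
  proof (rule the_equality)
    show "p \<in> Kp \<and> (\<exists>x0\<in>K. \<exists>m\<in>Ksp. a = (x0 + p, T x0 + m))"
      using p(1) x0K mKsp xdec ydec ax by blast
    fix p' assume "p' \<in> Kp \<and> (\<exists>x0\<in>K. \<exists>m\<in>Ksp. a = (x0 + p', T x0 + m))"
    then obtain x0' m' where h: "p' \<in> Kp" "x0' \<in> K" "x0' + p' = x" using ax by auto
    show "p' = p" using decomp_unique(1)[OF h(2) x0K h(1) p(1)] h(3) xdec by simp
  qed
  have GM: "Gamma_minus T a = m"
    unfolding Gamma_minus_def
  proof (rule the_equality)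
    show "m \<in> Ksp \<and> (\<exists>x0\<in>K. \<exists>p\<in>Kp. a = (x0 + p, T x0 + m))"
      using p(1) x0K mKsp xdec ydec ax by blast
    fix m' assume "m' \<in> Ksp \<and> (\<exists>x0\<in>K. \<exists>p\<in>Kp. a = (x0 + p, T x0 + m'))"
    then obtain x0' p' where h: "p' \<in> Kp" "x0' \<in> K" "x0' + p' = x" "T x0' + m' = smul l x" using ax by auto
    have "x0' = x0" using decomp_unique(2)[OF h(2) x0K h(1) p(1)] h(3) xdec by simp
    thus "m' = m" using h(4) ydec by simp
  qed
  define u where "u = R2 T m"
  have u: "u \<in> Ksp" "S2 u = m" using R2_props[OF mKsp] unfolding u_def by auto
  define r where "r = R1 T p"
  have r: "r \<in> Kp" "S1 r = p" using R1_props[OF p(1)] unfolding r_def by auto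
  have Tsu: "Ts u \<in> Kp" using TsKsp[OF u(1)] .
  define g where "g = r - Ts u"
  have gP: "Gamma'_plus T a = g"
    unfolding Gamma'_plus_def GP GM g_def r_def u_def using tstar[OF R2_props[OF mKsp, THEN conjunct1]] by simp
  have gKp: "g \<in> Kp" unfolding g_def using subsp_diff[OF Kp_subsp r(1) Tsu] .
  have gl: "g \<in> l2" using Kp_l2[OF gKp] .
  have Dg: "D g = p - Ts m"
  proof -
    have "D g = S1 g" using D_Kp[OF gKp] .
    also have "\<dots> = S1 r - S1 (Ts u)" unfolding g_def
      by (rule bop_diff[OF sqrt_parts(1)[OF S1_sqrt] Kp_subsp r(1) Tsu])
    also have "\<dots> = p - Ts m" using r(2) inter[OF u(1)] u(2) by simp
    finally show ?thesis .
  qed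
  define F where "F = (\<lambda>y. y - smul l (Ts y))"
  have Fb: "bounded_op l2 l2 (\<lambda>y. smul l (Ts y))"
    unfolding bounded_op_def
  proof (intro conjI ballI allI exI[of _ "cmod l"])
    fix y assume y: "y \<in> l2"
    show "smul l (Ts y) \<in> l2" using Tsl2[OF y] by simp
    show "l2norm (smul l (Ts y)) \<le> cmod l * l2norm y"
      using l2norm_smul[OF Tsl2[OF y]] Tsc[OF y] by (simp add: mult_left_mono)
  next
    fix y z assume y: "y \<in> l2" and z: "z \<in> l2"
    show "smul l (Ts (y + z)) = smul l (Ts y) + smul l (Ts z)" using bop_add[OF Tsb y z] smul_add by simp
  next
    fix c y assume y: "y \<in> l2"
    show "smul l (Ts (smul c y)) = smul c (smul l (Ts y))" using bop_smul[OF Tsb y] smul_smul by (simp add: mult.commute)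
  qed
  have Finj: "y = y'" if y: "y \<in> l2" "y' \<in> l2" "F y = F y'" for y y'
  proof -
    define z where "z = y - y'"
    have zl: "z \<in> l2" unfolding z_def using y by simp
    have "smul l (Ts z) = smul l (Ts y) - smul l (Ts y')"
      unfolding z_def using bop_diff[OF Fb subsp_l2_UNIV y(1,2)] by simp
    also have "\<dots> = y - y'" using y(3) unfolding F_def by (simp add: algebra_simps)
    finally have zz: "z = smul l (Ts z)" unfolding z_def by simp
    have "l2norm z \<le> cmod l * l2norm z"
    proof -
      have "l2norm z = cmod l * l2norm (Ts z)" using zz l2norm_smul[OF Tsl2[OF zl]] by metis
      also have "\<dots> \<le> cmod l * l2norm z" using Tsc[OF zl] by (simp add: mult_left_mono)
      finally show ?thesis .
    qed
    hence "l2norm z = 0" using l l2norm_nonneg[OF zl]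
      by (metis mult_le_cancel_right1 norm_ge_zero not_less order_antisym)
    hence "z = 0" using l2norm_zero_iff[OF zl] by simp
    thus ?thesis unfolding z_def by simp
  qed
  have Fx: "F x = p - Ts m"
  proof -
    have "smul l (Ts x) = Ts (smul l x)" using bop_smul[OF Tsb x] by simp
    also have "\<dots> = Ts (T x0) + Ts m" using ydec bop_add[OF Tsb Tl2[OF x0l] ml] by simp
    also have "\<dots> = x0 + Ts m" using x0K K_iff by simp
    finally show ?thesis unfolding F_def x0_def by simp
  qed
  have Inv: "op_inv_on l2 F (D g) = x"
    by (rule inv_on_eq[where M=l2 and F=F, OF Finj x]) (use Fx Dg pl Tsl2[OF ml] in auto)
  have CF: "char_fun T l g = - T g + smul l (Ds x)"
    unfolding char_fun_def using gKp Inv unfolding F_def by simp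
  have Dsx: "smul l (Ds x) = S2 m"
  proof -
    have "smul l (Ds x) = Ds (smul l x)" using bop_smul[OF sqrt_parts(1)[OF Ds_sqrt] x] by simp
    also have "\<dots> = Ds (T x0) + Ds m" using ydec bop_add[OF sqrt_parts(1)[OF Ds_sqrt] Tl2[OF x0l] ml] by simp
    also have "\<dots> = S2 m" using Ds_Ks[OF TK[OF x0K]] Ds_Ksp[OF mKsp] by simp
    finally show ?thesis .
  qed
  have S2m: "S2 m = u - T (Ts u)"
    using sqrt_parts(3)[OF S2_sqrt u(1)] u(2) A2_eq[OF u(1)] by simp
  have Tg: "T g = T r - T (Ts u)"
    unfolding g_def by (rule bop_diff[OF Tb subsp_l2_UNIV Kp_l2[OF r(1)] Kp_l2[OF Tsu]])
  have GMm: "Gamma'_minus T a = T r - u"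
    unfolding Gamma'_minus_def GP GM r_def u_def ..
  show ?thesis unfolding GMm gP CF Dsx S2m Tg by simp
qed

end

theorem proposition4p8:
  fixes T :: "vec \<Rightarrow> vec" and l :: complex and a :: "vec \<times> vec"
  assumes "bounded_op l2 l2 T"
    and "\<forall>x\<in>l2. l2norm (T x) \<le> l2norm x"
    and "cnu T"
    and "op_norm_on (orth (Kset T)) T < 1"
    and "cmod l < 1"
    and "a \<in> N_lambda T l"
  shows "Gamma'_minus T a = - char_fun T l (Gamma'_plus T a)"
proof -
  interpret setting T using assms(1,2,4) by unfold_locales
  show ?thesis by (rule main[OF assms(5,6)])
qed


end
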